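(* Let $\mathbf{B}^{\mathrm{gap}}$ be the gap-insertion bialgebra of noncrossing partitions (with product $\cdot$, coproduct $\Delta_0$, counit $\varepsilon_{\mathrm{gap}}$) and $\mathbf{B}^{\mathrm{bl}}$ the block-substitution bialgebra of noncrossing partitions (product $m_{\mathrm{bl}}$), and let $\rho:\mathbf{B}^{\mathrm{gap}}\to\mathbf{B}^{\mathrm{gap}}\otimes\mathbf{B}^{\mathrm{bl}}$ be the coaction defined in the context. Then $\rho$ makes $\mathbf{B}^{\mathrm{gap}}$ a comodule bialgebra over $\mathbf{B}^{\mathrm{bl}}$; that is, for all $P,Q\in\mathbf{B}^{\mathrm{gap}}$: $$\rho(\mathbf 1)=\mathbf1\otimes\mathbf1,\qquad\rho(P\cdot Q)=\rho(P)\rho(Q),\qquad(\varepsilon_{\mathrm{gap}}\otimes\operatorname{Id})\rho(P)=\varepsilon_{\mathrm{gap}}(P)\mathbf 1,$$ $$(\Delta_0\otimes\operatorname{Id})\circ\rho(P)=(\operatorname{Id}\otimes\operatorname{Id}\otimes m_{\mathrm{bl}})\circ(\operatorname{Id}\otimes\tau\otimes\operatorname{Id})\circ(\rho\otimes\rho)\circ\Delta_0(P),$$ where $\tau:\mathbf{B}^{\mathrm{bl}}\otimes\mathbf{B}^{\mathrm{gap}}\to\mathbf{B}^{\mathrm{gap}}\otimes\mathbf{B}^{\mathrm{bl}}$ is the flip $b\otimes a\mapsto a\otimes b$.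
   Context: A partition of degree $n$ is a set partition of $[n]$ (degree $0$: only the empty partition $\emptyset$); it is noncrossing if there are no $a<c<b<d$ with $a,b$ in one block and $c,d$ in another. Partitions of finite linearly ordered sets are identified with partitions of $[n]$ via the order-preserving bijection; $P_{|X}$ is the induced partition on $X$. $\operatorname{Conv}(X)=\{\min X,\dots,\max X\}$; on blocks of $P$ let $\pi\to\rho$ iff $\operatorname{Conv}(\pi)\cap\rho\neq\emptyset$ (transitively closed). Upperset $U$: ($\pi\in U,\pi\to\rho$)$\Rightarrow\rho\in U$; lowerset $L$: ($\pi\in L,\sigma\to\pi$)$\Rightarrow\sigma\in L$. A cut $(L,U)$ splits the blocks into a lowerset $L$ and its complement $U$; $L$ is identified with the restriction of $P$ to the union of its blocks, with elements $x_1<\dots<x_k$; put $D_0=\{y<x_1\}$, $D_i=\{x_i<y<x_{i+1}\}$, $D_k=\{y>x_k\}$ ($D_0=[n]$ if $k=0$) and $U_i=P_{|D_i}$ (possibly $\emptyset$). $\mathbf{B}^{\mathrm{gap}}$ is the free associative unital algebra generated by all noncrossing partitions including $\emptyset$ (a generator distinct from the unit $\mathbf 1$), with coproduct $\Delta_0(P)=\sum_{(L,U)}L\otimes U_0U_1\cdots U_k$ extended multiplicatively and counit $\varepsilon_{\mathrm{gap}}(\emptyset)=1$, $\varepsilon_{\mathrm{gap}}(P)=0$ for $P$ nonempty. $\mathbf{B}^{\mathrm{bl}}$ is the free commutative unital algebra on nonempty noncrossing partitions; for noncrossing $P\leq Q$ (refinement: each block of $Q$ a union of blocks of $P$), $Q=\{\tau_1,\dots,\tau_l\}$,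 put $P/Q=P_{|\tau_1}\cdots P_{|\tau_l}\in\mathbf{B}^{\mathrm{bl}}$; its coproduct is $\delta(P)=\sum_{Q\geq P\text{ noncrossing}}Q\otimes P/Q$ (multiplicative), counit $1$ on one-block partitions and $0$ on others. The coaction $\rho$ is the algebra morphism with $\rho(P)=\sum_{Q\geq P\text{ noncrossing}}Q\otimes P/Q$ for nonempty noncrossing $P$ and $\rho(\emptyset)=\emptyset\otimes\mathbf 1$. *)

theory Defs
  imports Main "HOL-Library.Poly_Mapping" "HOL-Library.Multiset"
begin

type_synonym part = "nat set set"

definition is_partition :: "nat \<Rightarrow> part \<Rightarrow> bool" where
  "is_partition n P \<longleftrightarrow> (\<forall>B\<in>P. B \<noteq> {}) \<and> (\<forall>B\<in>P. \<forall>C\<in>P. B \<noteq> C \<longrightarrow> B \<inter> C = {})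
     \<and> \<Union>P = {1..n}"

definition deg :: "part \<Rightarrow> nat" where
  "deg P = card (\<Union>P)"

definition noncrossing :: "part \<Rightarrow> bool" where
  "noncrossing P \<longleftrightarrow> \<not> (\<exists>B\<in>P. \<exists>C\<in>P. B \<noteq> C \<and>
      (\<exists>a b c d. a < c \<and> c < b \<and> b < d \<and> a \<in> B \<and> b \<in> B \<and> c \<in> C \<and> d \<in> C))"

definition NC :: "part \<Rightarrow> bool" where
  "NC P \<longleftrightarrow> (\<exists>n. is_partition n P) \<and> noncrossing P"

text \<open>Order-preserving identification of a finite set X of naturals with [card X].\<close>
definition rank :: "nat set \<Rightarrow> nat \<Rightarrow> nat" where
  "rank X y = card {z\<in>X. z \<le> y}"

definition restr :: "part \<Rightarrow> nat set \<Rightarrow> part" where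
  "restr P X = (\<lambda>B. rank X ` (B \<inter> X)) ` {B\<in>P. B \<inter> X \<noteq> {}}"

definition Conv :: "nat set \<Rightarrow> nat set" where
  "Conv X = {Min X..Max X}"

definition arrow :: "part \<Rightarrow> nat set \<Rightarrow> nat set \<Rightarrow> bool" where
  "arrow P \<pi> \<sigma> \<longleftrightarrow> (\<pi>, \<sigma>) \<in> {(\<pi>, \<sigma>). \<pi> \<in> P \<and> \<sigma> \<in> P \<and> Conv \<pi> \<inter> \<sigma> \<noteq> {}}\<^sup>+"

definition lowerset :: "part \<Rightarrow> part \<Rightarrow> bool" where
  "lowerset P L \<longleftrightarrow> L \<subseteq> P \<and> (\<forall>\<pi>\<in>L. \<forall>\<sigma>\<in>P. arrow P \<sigma> \<pi> \<longrightarrow> \<sigma> \<in> L)"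

text \<open>The gap D_i (i = 0..k) determined by X = {x_1 < ... < x_k} inside [deg P].\<close>
definition gap :: "part \<Rightarrow> nat set \<Rightarrow> nat \<Rightarrow> nat set" where
  "gap P X i = {y \<in> {1..deg P}.
      (i = 0 \<or> sorted_list_of_set X ! (i - 1) < y) \<and> (i = card X \<or> y < sorted_list_of_set X ! i)}"

definition refines :: "part \<Rightarrow> part \<Rightarrow> bool" where
  "refines P Q \<longleftrightarrow> (\<forall>\<tau>\<in>Q. \<exists>S\<subseteq>P. \<tau> = \<Union>S)"

definition coarser_NC :: "part \<Rightarrow> part set" where
  "coarser_NC P = {Q. is_partition (deg P) Q \<and> noncrossing Q \<and> refines P Q}"

text \<open>P/Q as a monomial of the free commutative algebra B^bl.\<close>
definition quot :: "part \<Rightarrow> part \<Rightarrow> part multiset" where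
  "quot P Q = image_mset (\<lambda>\<tau>. restr P \<tau>) (mset_set Q)"

text \<open>Words of partitions are the basis of B^gap (free associative algebra),
  multisets of nonempty partitions the basis of B^bl (free commutative algebra).\<close>
type_synonym word = "part list"
type_synonym mono = "part multiset"

definition pm_scale :: "'k::comm_ring_1 \<Rightarrow> ('b \<Rightarrow>\<^sub>0 'k) \<Rightarrow> ('b \<Rightarrow>\<^sub>0 'k)" where
  "pm_scale c f = Poly_Mapping.map (\<lambda>x. c * x) f"

definition pm_ext :: "('b \<Rightarrow> ('c \<Rightarrow>\<^sub>0 'k::comm_ring_1)) \<Rightarrow> ('b \<Rightarrow>\<^sub>0 'k) \<Rightarrow> ('c \<Rightarrow>\<^sub>0 'k)" where
  "pm_ext \<phi> f = (\<Sum>a\<in>Poly_Mapping.keys f. pm_scale (Poly_Mapping.lookup f a) (\<phi> a))"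

definition pm_conv :: "('b \<Rightarrow> 'b \<Rightarrow> 'b) \<Rightarrow> ('b \<Rightarrow>\<^sub>0 'k::comm_ring_1) \<Rightarrow> ('b \<Rightarrow>\<^sub>0 'k) \<Rightarrow> ('b \<Rightarrow>\<^sub>0 'k)" where
  "pm_conv m f g = (\<Sum>a\<in>Poly_Mapping.keys f. \<Sum>b\<in>Poly_Mapping.keys g. Poly_Mapping.single (m a b) (Poly_Mapping.lookup f a * Poly_Mapping.lookup g b))"

definition pm_tprod :: "('b \<Rightarrow>\<^sub>0 'k::comm_ring_1) \<Rightarrow> ('c \<Rightarrow>\<^sub>0 'k) \<Rightarrow> ('b \<times> 'c \<Rightarrow>\<^sub>0 'k)" where
  "pm_tprod f g = (\<Sum>a\<in>Poly_Mapping.keys f. \<Sum>b\<in>Poly_Mapping.keys g. Poly_Mapping.single (a, b) (Poly_Mapping.lookup f a * Poly_Mapping.lookup g b))"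

definition pm_tensor_map :: "('b \<Rightarrow> ('d \<Rightarrow>\<^sub>0 'k::comm_ring_1)) \<Rightarrow> ('c \<Rightarrow> ('e \<Rightarrow>\<^sub>0 'k))
     \<Rightarrow> ('b \<times> 'c \<Rightarrow>\<^sub>0 'k) \<Rightarrow> ('d \<times> 'e \<Rightarrow>\<^sub>0 'k)" where
  "pm_tensor_map \<phi> \<psi> = pm_ext (\<lambda>(x, y). pm_tprod (\<phi> x) (\<psi> y))"

definition pm_relabel :: "('b \<Rightarrow> 'c) \<Rightarrow> ('b \<Rightarrow>\<^sub>0 'k::comm_ring_1) \<Rightarrow> ('c \<Rightarrow>\<^sub>0 'k)" where
  "pm_relabel h = pm_ext (\<lambda>x. Poly_Mapping.single (h x) 1)"

definition pm_basis :: "'b \<Rightarrow> ('b \<Rightarrow>\<^sub>0 'k::comm_ring_1)" where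
  "pm_basis x = Poly_Mapping.single x 1"

definition gap_mult :: "(word \<Rightarrow>\<^sub>0 'k::comm_ring_1) \<Rightarrow> (word \<Rightarrow>\<^sub>0 'k) \<Rightarrow> (word \<Rightarrow>\<^sub>0 'k)" where
  "gap_mult = pm_conv (@)"

definition gap_one :: "word \<Rightarrow>\<^sub>0 'k::comm_ring_1" where
  "gap_one = pm_basis []"

definition bl_one :: "mono \<Rightarrow>\<^sub>0 'k::comm_ring_1" where
  "bl_one = pm_basis {#}"

definition m_bl :: "(mono \<times> mono \<Rightarrow>\<^sub>0 'k::comm_ring_1) \<Rightarrow> (mono \<Rightarrow>\<^sub>0 'k)" where
  "m_bl = pm_relabel (\<lambda>(a, b). a + b)"

definition gg_mult :: "(word \<times> word \<Rightarrow>\<^sub>0 'k::comm_ring_1) \<Rightarrow> _ \<Rightarrow> _" where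
  "gg_mult = pm_conv (\<lambda>(a, b) (c, d). (a @ c, b @ d))"

definition gb_mult :: "(word \<times> mono \<Rightarrow>\<^sub>0 'k::comm_ring_1) \<Rightarrow> _ \<Rightarrow> _" where
  "gb_mult = pm_conv (\<lambda>(a, b) (c, d). (a @ c, b + d))"

definition Delta0_gen :: "part \<Rightarrow> (word \<times> word \<Rightarrow>\<^sub>0 'k::comm_ring_1)" where
  "Delta0_gen P = (\<Sum>L\<in>{L. lowerset P L}.
      pm_basis ([restr P (\<Union>L)],
                map (\<lambda>i. restr P (gap P (\<Union>L) i)) [0..<card (\<Union>L) + 1]))"

definition Delta0_word :: "word \<Rightarrow> (word \<times> word \<Rightarrow>\<^sub>0 'k::comm_ring_1)" where
  "Delta0_word w = foldr (\<lambda>P acc. gg_mult (Delta0_gen P) acc) w (pm_basis ([], []))"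

definition Delta0 :: "(word \<Rightarrow>\<^sub>0 'k::comm_ring_1) \<Rightarrow> (word \<times> word \<Rightarrow>\<^sub>0 'k)" where
  "Delta0 = pm_ext Delta0_word"

definition eps_gap_word :: "word \<Rightarrow> 'k::comm_ring_1" where
  "eps_gap_word w = (if (\<forall>P\<in>set w. P = {}) then 1 else 0)"

definition eps_gap :: "(word \<Rightarrow>\<^sub>0 'k::comm_ring_1) \<Rightarrow> 'k" where
  "eps_gap f = (\<Sum>w\<in>Poly_Mapping.keys f. Poly_Mapping.lookup f w * eps_gap_word w)"

definition rho_gen :: "part \<Rightarrow> (word \<times> mono \<Rightarrow>\<^sub>0 'k::comm_ring_1)" where
  "rho_gen P = (if P = {} then pm_basis ([{}], {#})
                else (\<Sum>Q\<in>coarser_NC P. pm_basis ([Q], quot P Q)))"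

definition rho_word :: "word \<Rightarrow> (word \<times> mono \<Rightarrow>\<^sub>0 'k::comm_ring_1)" where
  "rho_word w = foldr (\<lambda>P acc. gb_mult (rho_gen P) acc) w (pm_basis ([], {#}))"

definition rho :: "(word \<Rightarrow>\<^sub>0 'k::comm_ring_1) \<Rightarrow> (word \<times> mono \<Rightarrow>\<^sub>0 'k)" where
  "rho = pm_ext rho_word"

definition in_Bgap :: "(word \<Rightarrow>\<^sub>0 'k::comm_ring_1) \<Rightarrow> bool" where
  "in_Bgap f \<longleftrightarrow> (\<forall>w\<in>Poly_Mapping.keys f. \<forall>P\<in>set w. NC P)"

end

theory Submission
  imports Defs
begin

lemma lookup_pm_scale[simp]: "Poly_Mapping.lookup (pm_scale c f) x = c * Poly_Mapping.lookup f x"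
  unfolding pm_scale_def by (simp add: Poly_Mapping.map.rep_eq when_def)

lemma pm_scale_add: "pm_scale c (f + g) = pm_scale c f + pm_scale c g"
  by (rule poly_mapping_eqI) (simp add: lookup_add algebra_simps)

lemma pm_scale_add_left: "pm_scale (c + d) f = pm_scale c f + pm_scale d f"
  by (rule poly_mapping_eqI) (simp add: lookup_add algebra_simps)

lemma pm_scale_sum: "pm_scale c (sum f A) = (\<Sum>a\<in>A. pm_scale c (f a))"
  by (rule poly_mapping_eqI) (simp add: lookup_sum sum_distrib_left)

lemma pm_scale_zero[simp]: "pm_scale 0 f = 0" "pm_scale c 0 = 0"
  by (rule poly_mapping_eqI, simp)+

lemma pm_scale_one[simp]: "pm_scale 1 f = f"
  by (rule poly_mapping_eqI, simp)

lemma pm_scale_scale[simp]: "pm_scale c (pm_scale d f) = pm_scale (c * d) f"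
  by (rule poly_mapping_eqI, simp add: mult.assoc)

lemma pm_scale_single[simp]: "pm_scale c (Poly_Mapping.single x d) = Poly_Mapping.single x (c * d)"
  by (rule poly_mapping_eqI) (simp add: lookup_single when_def)

lemma keys_pm_scale: "Poly_Mapping.keys (pm_scale c f) \<subseteq> Poly_Mapping.keys f"
  by (auto simp: in_keys_iff)

lemma pm_ext_superset:
  assumes "finite S" "Poly_Mapping.keys f \<subseteq> S"
  shows "pm_ext \<phi> f = (\<Sum>a\<in>S. pm_scale (Poly_Mapping.lookup f a) (\<phi> a))"
  unfolding pm_ext_def
  by (rule sum.mono_neutral_left) (use assms in \<open>auto simp: in_keys_iff\<close>)

lemma pm_ext_add: "pm_ext \<phi> (f + g) = pm_ext \<phi> f + pm_ext \<phi> g"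
proof -
  let ?S = "Poly_Mapping.keys f \<union> Poly_Mapping.keys g"
  have "pm_ext \<phi> (f + g) = (\<Sum>a\<in>?S. pm_scale (Poly_Mapping.lookup (f+g) a) (\<phi> a))"
    by (rule pm_ext_superset) (simp_all add: keys_add)
  also have "\<dots> = (\<Sum>a\<in>?S. pm_scale (Poly_Mapping.lookup f a) (\<phi> a)) + (\<Sum>a\<in>?S. pm_scale (Poly_Mapping.lookup g a) (\<phi> a))"
    by (simp add: lookup_add pm_scale_add_left sum.distrib)
  also have "\<dots> = pm_ext \<phi> f + pm_ext \<phi> g"
    by (simp add: pm_ext_superset[symmetric])
  finally show ?thesis .
qed

lemma pm_ext_zero[simp]: "pm_ext \<phi> 0 = 0"
  by (simp add: pm_ext_def)

lemma pm_ext_scale: "pm_ext \<phi> (pm_scale c f) = pm_scale c (pm_ext \<phi> f)"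
proof -
  have "pm_ext \<phi> (pm_scale c f) = (\<Sum>a\<in>Poly_Mapping.keys f. pm_scale (Poly_Mapping.lookup (pm_scale c f) a) (\<phi> a))"
    by (rule pm_ext_superset) (auto simp: keys_pm_scale)
  then show ?thesis by (simp add: pm_ext_def pm_scale_sum)
qed

lemma pm_ext_sum: "pm_ext \<phi> (sum f A) = (\<Sum>a\<in>A. pm_ext \<phi> (f a))"
  by (induction A rule: infinite_finite_induct) (auto simp: pm_ext_add)

lemma pm_ext_single: "pm_ext \<phi> (Poly_Mapping.single x c) = pm_scale c (\<phi> x)"
  by (subst pm_ext_superset[of "{x}"]) auto

lemma pm_ext_basis[simp]: "pm_ext \<phi> (pm_basis x) = \<phi> x"
  by (simp add: pm_basis_def pm_ext_single)

lemma pm_ext_cong: "(\<And>a. a \<in> Poly_Mapping.keys f \<Longrightarrow> \<phi> a = \<psi> a) \<Longrightarrow> pm_ext \<phi> f = pm_ext \<psi> f"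
  by (simp add: pm_ext_def)

lemma pm_ext_compose: "pm_ext \<psi> (pm_ext \<phi> f) = pm_ext (\<lambda>a. pm_ext \<psi> (\<phi> a)) f"
  by (simp add: pm_ext_def[of \<phi>] pm_ext_sum pm_ext_scale) (simp add: pm_ext_def)

lemma pm_ext_id: "pm_ext pm_basis f = f"
proof (rule poly_mapping_eqI)
  fix x
  show "Poly_Mapping.lookup (pm_ext pm_basis f) x = Poly_Mapping.lookup f x"
    by (cases "x \<in> Poly_Mapping.keys f")
       (auto simp: pm_ext_def pm_basis_def lookup_sum lookup_single when_def in_keys_iff)
qed

definition lin :: "(('b \<Rightarrow>\<^sub>0 'k::comm_ring_1) \<Rightarrow> ('c \<Rightarrow>\<^sub>0 'k)) \<Rightarrow> bool" where
  "lin F \<longleftrightarrow> (\<forall>f. F f = pm_ext (\<lambda>a. F (pm_basis a)) f)"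

lemma lin_ext: "lin (pm_ext \<phi>)"
  by (simp add: lin_def)

lemma lin_id: "lin (\<lambda>f. f)"
  by (simp add: lin_def pm_ext_id)

lemma linD: "lin F \<Longrightarrow> F f = pm_ext (\<lambda>a. F (pm_basis a)) f"
  unfolding lin_def by (rule spec)

lemma lin_comp: assumes F: "lin F" and G: "lin G" shows "lin (\<lambda>f. F (G f))"
  unfolding lin_def
proof
  fix f
  have "F (G f) = pm_ext (\<lambda>a. F (pm_basis a)) (pm_ext (\<lambda>a. G (pm_basis a)) f)"
    by (subst linD[OF G], rule linD[OF F])
  also have "\<dots> = pm_ext (\<lambda>a. pm_ext (\<lambda>a. F (pm_basis a)) (G (pm_basis a))) f"
    by (rule pm_ext_compose)
  also have "\<dots> = pm_ext (\<lambda>a. F (G (pm_basis a))) f"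
    by (simp add: linD[OF F, symmetric])
  finally show "F (G f) = pm_ext (\<lambda>a. F (G (pm_basis a))) f" .
qed

lemma lin_eq:
  assumes F: "lin F" and G: "lin G" and e: "\<And>a. a \<in> Poly_Mapping.keys f \<Longrightarrow> F (pm_basis a) = G (pm_basis a)"
  shows "F f = G f"
proof -
  have "F f = pm_ext (\<lambda>a. F (pm_basis a)) f" by (rule linD[OF F])
  also have "\<dots> = pm_ext (\<lambda>a. G (pm_basis a)) f" by (rule pm_ext_cong) (rule e)
  also have "\<dots> = G f" by (rule linD[OF G, symmetric])
  finally show ?thesis .
qed

lemma lin_eqI:
  assumes "lin F" "lin G" "\<And>a. F (pm_basis a) = G (pm_basis a)"
  shows "F f = G f"
  by (rule lin_eq[OF assms(1,2)]) (rule assms(3))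

lemma lin_add: assumes "lin F" shows "F (f + g) = F f + F g"
  by (subst (1 2 3) linD[OF assms]) (rule pm_ext_add)

lemma lin_sum: assumes "lin F" shows "F (sum f A) = (\<Sum>a\<in>A. F (f a))"
proof -
  have "F (sum f A) = pm_ext (\<lambda>a. F (pm_basis a)) (sum f A)" by (rule linD[OF assms])
  also have "\<dots> = (\<Sum>a\<in>A. pm_ext (\<lambda>a. F (pm_basis a)) (f a))" by (rule pm_ext_sum)
  also have "\<dots> = (\<Sum>a\<in>A. F (f a))" by (simp add: linD[OF assms, symmetric])
  finally show ?thesis .
qed

lemma lin_scale: assumes "lin F" shows "F (pm_scale c f) = pm_scale c (F f)"
  by (subst (1 2) linD[OF assms]) (rule pm_ext_scale)

definition pm_bil :: "('b \<Rightarrow> 'c \<Rightarrow> 'd) \<Rightarrow> ('b \<Rightarrow>\<^sub>0 'k::comm_ring_1) \<Rightarrow> ('c \<Rightarrow>\<^sub>0 'k) \<Rightarrow> ('d \<Rightarrow>\<^sub>0 'k)" where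
  "pm_bil m f g = (\<Sum>a\<in>Poly_Mapping.keys f. \<Sum>b\<in>Poly_Mapping.keys g. Poly_Mapping.single (m a b) (Poly_Mapping.lookup f a * Poly_Mapping.lookup g b))"

lemma pm_conv_bil: "pm_conv m = pm_bil m"
  by (simp add: fun_eq_iff pm_conv_def pm_bil_def)

lemma pm_tprod_bil: "pm_tprod = pm_bil Pair"
  by (simp add: fun_eq_iff pm_tprod_def pm_bil_def)

lemma pm_bil_left: "pm_bil m f g = pm_ext (\<lambda>a. pm_ext (\<lambda>b. pm_basis (m a b)) g) f"
  by (simp add: pm_bil_def pm_ext_def pm_scale_sum pm_basis_def mult.commute)

lemma pm_bil_right: "pm_bil m f g = pm_ext (\<lambda>b. pm_ext (\<lambda>a. pm_basis (m a b)) f) g"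
  by (simp add: pm_bil_def pm_ext_def pm_scale_sum pm_basis_def mult.commute sum.swap[of _ "Poly_Mapping.keys g"])

lemma lin_bil1: "lin (\<lambda>f. pm_bil m f g)"
  by (simp add: pm_bil_left lin_ext)

lemma lin_bil2: "lin (\<lambda>g. pm_bil m f g)"
  by (simp add: pm_bil_right lin_ext)

lemma pm_bil_basis[simp]: "pm_bil m (pm_basis a) (pm_basis b) = pm_basis (m a b)"
  by (simp add: pm_bil_left)

lemma pm_bil_mult:
  assumes F: "lin F" and hom: "\<And>a b. F (pm_basis (m1 a b)) = pm_bil m2 (F (pm_basis a)) (F (pm_basis b))"
  shows "F (pm_bil m1 f g) = pm_bil m2 (F f) (F g)"
proof (rule lin_eqI[where F="\<lambda>f. F (pm_bil m1 f g)" and G="\<lambda>f. pm_bil m2 (F f) (F g)"])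
  show "lin (\<lambda>f. F (pm_bil m1 f g))" by (rule lin_comp[OF F lin_bil1])
  show "lin (\<lambda>f. pm_bil m2 (F f) (F g))" by (rule lin_comp[OF lin_bil1 F])
  fix a
  show "F (pm_bil m1 (pm_basis a) g) = pm_bil m2 (F (pm_basis a)) (F g)"
  proof (rule lin_eqI[where F="\<lambda>g. F (pm_bil m1 (pm_basis a) g)" and G="\<lambda>g. pm_bil m2 (F (pm_basis a)) (F g)"])
    show "lin (\<lambda>g. F (pm_bil m1 (pm_basis a) g))" by (rule lin_comp[OF F lin_bil2])
    show "lin (\<lambda>g. pm_bil m2 (F (pm_basis a)) (F g))" by (rule lin_comp[OF lin_bil2 F])
  qed (simp add: hom)
qed

lemma pm_bil_assoc:
  assumes "\<And>a b c. m (m a b) c = m a (m b c)"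
  shows "pm_bil m (pm_bil m f g) h = pm_bil m f (pm_bil m g h)"
proof (rule lin_eqI[where F="\<lambda>f. pm_bil m (pm_bil m f g) h" and G="\<lambda>f. pm_bil m f (pm_bil m g h)"])
  show "lin (\<lambda>f. pm_bil m (pm_bil m f g) h)" by (rule lin_comp[OF lin_bil1 lin_bil1])
  show "lin (\<lambda>f. pm_bil m f (pm_bil m g h))" by (rule lin_bil1)
  fix a
  show "pm_bil m (pm_bil m (pm_basis a) g) h = pm_bil m (pm_basis a) (pm_bil m g h)"
  proof (rule lin_eqI[where F="\<lambda>g. pm_bil m (pm_bil m (pm_basis a) g) h" and G="\<lambda>g. pm_bil m (pm_basis a) (pm_bil m g h)"])
    show "lin (\<lambda>g. pm_bil m (pm_bil m (pm_basis a) g) h)" by (rule lin_comp[OF lin_bil1 lin_bil2])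
    show "lin (\<lambda>g. pm_bil m (pm_basis a) (pm_bil m g h))" by (rule lin_comp[OF lin_bil2 lin_bil1])
    fix b
    show "pm_bil m (pm_bil m (pm_basis a) (pm_basis b)) h = pm_bil m (pm_basis a) (pm_bil m (pm_basis b) h)"
    proof (rule lin_eqI[where F="\<lambda>h. pm_bil m (pm_bil m (pm_basis a) (pm_basis b)) h" and G="\<lambda>h. pm_bil m (pm_basis a) (pm_bil m (pm_basis b) h)"])
      show "lin (\<lambda>h. pm_bil m (pm_bil m (pm_basis a) (pm_basis b)) h)" by (rule lin_bil2)
      show "lin (\<lambda>h. pm_bil m (pm_basis a) (pm_bil m (pm_basis b) h))" by (rule lin_comp[OF lin_bil2 lin_bil2])
    qed (simp add: assms)
  qed
qed

lemma pm_bil_unit_left: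
  assumes "\<And>b. m e b = b"
  shows "pm_bil m (pm_basis e) g = g"
  by (rule lin_eqI[OF lin_bil2 lin_id]) (simp add: assms)

lemma pm_bil_unit_right:
  assumes "\<And>b. m b e = b"
  shows "pm_bil m g (pm_basis e) = g"
  by (rule lin_eqI[OF lin_bil1 lin_id]) (simp add: assms)

lemma pm_bil_interchange:
  "pm_bil Pair (pm_bil m1 f g) (pm_bil m2 h k)
   = pm_bil (\<lambda>(a, b) (c, d). (m1 a c, m2 b d)) (pm_bil Pair f h) (pm_bil Pair g k)"
  (is "?L f g h k = ?R f g h k")
proof (rule lin_eqI[where F="\<lambda>f. ?L f g h k" and G="\<lambda>f. ?R f g h k"])
  show "lin (\<lambda>f. ?L f g h k)" by (rule lin_comp[OF lin_bil1 lin_bil1])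
  show "lin (\<lambda>f. ?R f g h k)" by (rule lin_comp[OF lin_bil1 lin_bil1])
  fix a
  show "?L (pm_basis a) g h k = ?R (pm_basis a) g h k"
  proof (rule lin_eqI[where F="\<lambda>g. ?L (pm_basis a) g h k" and G="\<lambda>g. ?R (pm_basis a) g h k"])
    show "lin (\<lambda>g. ?L (pm_basis a) g h k)" by (rule lin_comp[OF lin_bil1 lin_bil2])
    show "lin (\<lambda>g. ?R (pm_basis a) g h k)" by (rule lin_comp[OF lin_bil2 lin_bil1])
    fix b
    show "?L (pm_basis a) (pm_basis b) h k = ?R (pm_basis a) (pm_basis b) h k"
    proof (rule lin_eqI[where F="\<lambda>h. ?L (pm_basis a) (pm_basis b) h k" and G="\<lambda>h. ?R (pm_basis a) (pm_basis b) h k"])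
      show "lin (\<lambda>h. ?L (pm_basis a) (pm_basis b) h k)" by (rule lin_comp[OF lin_bil2 lin_bil1])
      show "lin (\<lambda>h. ?R (pm_basis a) (pm_basis b) h k)" by (rule lin_comp[OF lin_bil1 lin_bil2])
      fix c
      show "?L (pm_basis a) (pm_basis b) (pm_basis c) k = ?R (pm_basis a) (pm_basis b) (pm_basis c) k"
      proof (rule lin_eqI[where F="\<lambda>k. ?L (pm_basis a) (pm_basis b) (pm_basis c) k" and G="\<lambda>k. ?R (pm_basis a) (pm_basis b) (pm_basis c) k"])
        show "lin (\<lambda>k. ?L (pm_basis a) (pm_basis b) (pm_basis c) k)" by (rule lin_comp[OF lin_bil2 lin_bil2])
        show "lin (\<lambda>k. ?R (pm_basis a) (pm_basis b) (pm_basis c) k)" by (rule lin_comp[OF lin_bil2 lin_bil2])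
      qed simp
    qed
  qed
qed

lemma pm_bil_sum_left: "pm_bil m (sum f A) g = (\<Sum>a\<in>A. pm_bil m (f a) g)"
  by (rule lin_sum[OF lin_bil1])

lemma pm_bil_sum_right: "pm_bil m f (sum g A) = (\<Sum>a\<in>A. pm_bil m f (g a))"
  by (rule lin_sum[OF lin_bil2])

definition gbm :: "word \<times> mono \<Rightarrow> word \<times> mono \<Rightarrow> word \<times> mono" where
  "gbm = (\<lambda>(a, b) (c, d). (a @ c, b + d))"
definition ggm :: "word \<times> word \<Rightarrow> word \<times> word \<Rightarrow> word \<times> word" where
  "ggm = (\<lambda>(a, b) (c, d). (a @ c, b @ d))"
definition ggbm :: "(word \<times> word) \<times> mono \<Rightarrow> (word \<times> word) \<times> mono \<Rightarrow> (word \<times> word) \<times> mono" where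
  "ggbm = (\<lambda>(a, b) (c, d). (ggm a c, b + d))"

lemma gbm_simp[simp]: "gbm (a, b) (c, d) = (a @ c, b + d)" by (simp add: gbm_def)
lemma ggm_simp[simp]: "ggm (a, b) (c, d) = (a @ c, b @ d)" by (simp add: ggm_def)
lemma ggbm_simp[simp]: "ggbm (a, b) (c, d) = (ggm a c, b + d)" by (simp add: ggbm_def)

lemma gb_mult_bil: "gb_mult = pm_bil gbm"
  by (simp add: gb_mult_def pm_conv_bil gbm_def)
lemma gg_mult_bil: "gg_mult = pm_bil ggm"
  by (simp add: gg_mult_def pm_conv_bil ggm_def)

lemma gbm_assoc: "gbm (gbm x y) z = gbm x (gbm y z)"
  by (cases x; cases y; cases z) (simp add: add.assoc)
lemma ggm_assoc: "ggm (ggm x y) z = ggm x (ggm y z)"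
  by (cases x; cases y; cases z) simp

lemma rho_basis[simp]: "rho (pm_basis w) = rho_word w"
  by (simp add: rho_def)
lemma Delta0_basis[simp]: "Delta0 (pm_basis w) = Delta0_word w"
  by (simp add: Delta0_def)

lemma rho_word_Nil[simp]: "rho_word [] = pm_basis ([], {#})"
  by (simp add: rho_word_def)
lemma rho_word_Cons: "rho_word (P # w) = gb_mult (rho_gen P) (rho_word w)"
  by (simp add: rho_word_def)
lemma Delta0_word_Nil[simp]: "Delta0_word [] = pm_basis ([], [])"
  by (simp add: Delta0_word_def)
lemma Delta0_word_Cons: "Delta0_word (P # w) = gg_mult (Delta0_gen P) (Delta0_word w)"
  by (simp add: Delta0_word_def)

lemma rho_word_append: "rho_word (u @ v) = (gb_mult (rho_word u) (rho_word v) :: _ \<Rightarrow>\<^sub>0 'k::comm_ring_1)"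
proof (induction u)
  case Nil
  have u: "\<And>b. gbm ([], {#}) b = b" by (case_tac b) simp
  then show ?case by (simp add: gb_mult_bil pm_bil_unit_left[where e="([], {#})"])
next
  case (Cons P u)
  then show ?case
    by (simp add: rho_word_Cons gb_mult_bil pm_bil_assoc gbm_assoc)
qed

lemma Delta0_word_append: "Delta0_word (u @ v) = (gg_mult (Delta0_word u) (Delta0_word v) :: _ \<Rightarrow>\<^sub>0 'k::comm_ring_1)"
proof (induction u)
  case Nil
  have u: "\<And>b. ggm ([], []) b = b" by (case_tac b) simp
  then show ?case by (simp add: gg_mult_bil pm_bil_unit_left[where e="([], [])"])
next
  case (Cons P u)
  then show ?case
    by (simp add: Delta0_word_Cons gg_mult_bil pm_bil_assoc ggm_assoc)
qed

lemma lin_rho: "lin rho" by (simp add: rho_def lin_ext)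
lemma lin_Delta0: "lin Delta0" by (simp add: Delta0_def lin_ext)
lemma lin_tensor_map: "lin (pm_tensor_map \<phi> \<psi>)" by (simp add: pm_tensor_map_def lin_ext)
lemma lin_relabel: "lin (pm_relabel h)" by (simp add: pm_relabel_def lin_ext)

lemma tensor_map_basis[simp]: "pm_tensor_map \<phi> \<psi> (pm_basis (x, y)) = pm_tprod (\<phi> x) (\<psi> y)"
  by (simp add: pm_tensor_map_def)
lemma relabel_basis[simp]: "pm_relabel h (pm_basis x) = pm_basis (h x)"
  by (simp add: pm_relabel_def pm_basis_def pm_ext_single)
lemma tprod_basis[simp]: "pm_tprod (pm_basis x) (pm_basis y) = pm_basis (x, y)"
  by (simp add: pm_tprod_bil)
lemma m_bl_basis[simp]: "m_bl (pm_basis (b, d)) = pm_basis (b + d)"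
  by (simp add: m_bl_def)

lemma rho_mult: "rho (gap_mult P Q) = gb_mult (rho P) (rho Q)"
  unfolding gap_mult_def pm_conv_bil gb_mult_bil
  by (rule pm_bil_mult[OF lin_rho]) (simp add: rho_word_append gb_mult_bil)

lemma rho_one: "rho (gap_one :: word \<Rightarrow>\<^sub>0 'k::comm_ring_1) = pm_basis ([], {#})"
  by (simp add: gap_one_def)

lemma eps_gap_basis[simp]: "eps_gap (pm_basis w :: word \<Rightarrow>\<^sub>0 'k::comm_ring_1) = eps_gap_word w"
  by (simp add: eps_gap_def pm_basis_def)

lemma eps_gap_word_append: "(eps_gap_word (u @ v) :: 'k::comm_ring_1) = eps_gap_word u * eps_gap_word v"
  by (auto simp: eps_gap_word_def)

lemma pm_scale_sum_left: "pm_scale (sum f A) x = (\<Sum>a\<in>A. pm_scale (f a) x)"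
  by (rule poly_mapping_eqI) (simp add: lookup_sum sum_distrib_right)

lemma pm_bil_scale: "pm_bil m (pm_scale c f) (pm_scale d g) = pm_scale (c * d) (pm_bil m f g)"
  by (simp add: lin_scale[OF lin_bil1] lin_scale[OF lin_bil2] mult.commute)

definition EE :: "(word \<times> mono \<Rightarrow>\<^sub>0 'k::comm_ring_1) \<Rightarrow> (mono \<Rightarrow>\<^sub>0 'k)" where
  "EE = pm_ext (\<lambda>(w, m). pm_scale (eps_gap (pm_basis w)) (pm_basis m))"

lemma EE_basis[simp]: "EE (pm_basis (w, m)) = pm_scale (eps_gap_word w) (pm_basis m)"
  by (simp add: EE_def)

lemma EE_mult: "EE (pm_bil gbm x y) = pm_bil (+) (EE x) (EE y)"
proof (rule pm_bil_mult)
  show "lin EE" by (simp add: EE_def lin_ext)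
  fix a b :: "word \<times> mono"
  show "EE (pm_basis (gbm a b)) = pm_bil (+) (EE (pm_basis a)) (EE (pm_basis b))"
    by (cases a; cases b) (simp add: pm_bil_scale eps_gap_word_append)
qed

lemma partition_empty_iff:
  assumes "is_partition n P" shows "deg P = n" "P = {} \<longleftrightarrow> n = 0"
  using assms unfolding is_partition_def deg_def by auto

lemma coarser_NC_nonempty:
  assumes "NC P" "P \<noteq> {}" "Q \<in> coarser_NC P" shows "Q \<noteq> {}"
proof -
  obtain n where n: "is_partition n P" using assms(1) by (auto simp: NC_def)
  then have "deg P = n" "n \<noteq> 0" using partition_empty_iff[OF n] assms(2) by auto
  moreover have "is_partition (deg P) Q" using assms(3) by (simp add: coarser_NC_def)
  ultimately show ?thesis by (metis partition_empty_iff(2))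
qed

lemma coarser_NC_empty: "coarser_NC {} = {{}}"
proof -
  have "deg {} = 0" by (simp add: deg_def)
  then show ?thesis
    by (auto simp: coarser_NC_def is_partition_def noncrossing_def refines_def)
qed

lemma rho_gen_uniform:
  assumes "NC P"
  shows "rho_gen P = (\<Sum>Q\<in>coarser_NC P. pm_basis ([Q], quot P Q))"
proof (cases "P = {}")
  case True
  then show ?thesis by (simp add: rho_gen_def coarser_NC_empty quot_def)
next
  case False
  then show ?thesis by (simp add: rho_gen_def)
qed

lemma EE_rho_gen:
  assumes "NC P"
  shows "EE (rho_gen P) = pm_scale (eps_gap_word [P]) (pm_basis {#})"
proof (cases "P = {}")
  case True
  then show ?thesis by (simp add: rho_gen_def)
next
  case False
  have "EE (rho_gen P) = (\<Sum>Q\<in>coarser_NC P. EE (pm_basis ([Q], quot P Q)))"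
    using False by (simp add: rho_gen_def lin_sum[OF lin_ext] EE_def)
  also have "\<dots> = 0"
    using coarser_NC_nonempty[OF assms False] by (intro sum.neutral) (auto simp: eps_gap_word_def)
  finally show ?thesis using False by (simp add: eps_gap_word_def)
qed

lemma EE_rho_word:
  assumes "\<forall>P\<in>set w. NC P"
  shows "EE (rho_word w) = (pm_scale (eps_gap_word w) (pm_basis {#}) :: mono \<Rightarrow>\<^sub>0 'k::comm_ring_1)"
  using assms
proof (induction w)
  case Nil
  then show ?case by (simp add: eps_gap_word_def)
next
  case (Cons P w)
  have "EE (rho_word (P # w)) = (pm_bil (+) (EE (rho_gen P)) (EE (rho_word w)) :: mono \<Rightarrow>\<^sub>0 'k)"
    by (simp add: rho_word_Cons gb_mult_bil EE_mult)
  also have "\<dots> = pm_scale (eps_gap_word [P] * eps_gap_word w) (pm_basis {#})"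
  proof -
    have 1: "EE (rho_word w) = (pm_scale (eps_gap_word w) (pm_basis {#}) :: mono \<Rightarrow>\<^sub>0 'k)" using Cons by simp
    have 2: "EE (rho_gen P) = (pm_scale (eps_gap_word [P]) (pm_basis {#}) :: mono \<Rightarrow>\<^sub>0 'k)"
      using Cons.prems by (simp add: EE_rho_gen)
    show ?thesis using 1 2 by (simp add: pm_bil_scale)
  qed
  finally show ?case by (simp add: eps_gap_word_append[of "[P]" w, simplified])
qed

lemma counit_part:
  fixes P :: "word \<Rightarrow>\<^sub>0 'k::comm_ring_1"
  assumes "in_Bgap P"
  shows "pm_ext (\<lambda>(w, m). pm_scale (eps_gap (pm_basis w)) (pm_basis m)) (rho P)
         = pm_scale (eps_gap P) bl_one"
proof -
  have "EE (rho P) = pm_ext (\<lambda>w. EE (rho_word w)) P"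
    by (simp add: rho_def EE_def pm_ext_compose)
  also have "\<dots> = pm_ext (\<lambda>w. pm_scale (eps_gap_word w) (pm_basis {#})) P"
    using assms by (intro pm_ext_cong EE_rho_word) (auto simp: in_Bgap_def)
  also have "\<dots> = pm_scale (eps_gap P) bl_one"
    by (simp add: pm_ext_def eps_gap_def bl_one_def pm_scale_sum_left)
  finally show ?thesis by (simp add: EE_def)
qed

definition LM :: "(word \<times> mono \<Rightarrow>\<^sub>0 'k::comm_ring_1) \<Rightarrow> ((word \<times> word) \<times> mono \<Rightarrow>\<^sub>0 'k)" where
  "LM = pm_tensor_map (\<lambda>w. Delta0 (pm_basis w)) pm_basis"

definition TR :: "((word \<times> mono) \<times> (word \<times> mono) \<Rightarrow>\<^sub>0 'k::comm_ring_1) \<Rightarrow> ((word \<times> word) \<times> mono \<Rightarrow>\<^sub>0 'k)" where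
  "TR f = pm_tensor_map pm_basis (\<lambda>bd. m_bl (pm_basis bd)) (pm_relabel (\<lambda>((a, b), (c, d)). ((a, c), (b, d))) f)"

definition RR :: "(word \<times> word \<Rightarrow>\<^sub>0 'k::comm_ring_1) \<Rightarrow> ((word \<times> word) \<times> mono \<Rightarrow>\<^sub>0 'k)" where
  "RR f = TR (pm_tensor_map (\<lambda>w. rho (pm_basis w)) (\<lambda>w. rho (pm_basis w)) f)"

lemma lin_LM: "lin LM" by (simp add: LM_def lin_tensor_map)
lemma lin_TR: "lin TR"
  unfolding TR_def[abs_def] by (rule lin_comp[OF lin_tensor_map lin_relabel])
lemma lin_RR: "lin RR"
  unfolding RR_def[abs_def] by (rule lin_comp[OF lin_TR lin_tensor_map])

lemma LM_basis[simp]: "LM (pm_basis (w, m)) = pm_tprod (Delta0_word w) (pm_basis m)"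
  by (simp add: LM_def)
lemma TR_basis[simp]: "TR (pm_basis ((a, b), (c, d))) = pm_basis ((a, c), b + d)"
  by (simp add: TR_def)
lemma RR_basis[simp]: "RR (pm_basis (a, c)) = TR (pm_tprod (rho_word a) (rho_word c))"
  by (simp add: RR_def)

lemma LM_mult: "LM (pm_bil gbm x y) = pm_bil ggbm (LM x) (LM y)"
proof (rule pm_bil_mult[OF lin_LM])
  fix a b :: "word \<times> mono"
  obtain w1 m1 w2 m2 where ab: "a = (w1, m1)" "b = (w2, m2)" by (cases a; cases b)
  have "LM (pm_basis (gbm a b)) = pm_tprod (pm_bil ggm (Delta0_word w1) (Delta0_word w2))
          (pm_bil (+) (pm_basis m1) (pm_basis m2))"
    by (simp add: ab Delta0_word_append gg_mult_bil)
  also have "\<dots> = pm_bil ggbm (pm_tprod (Delta0_word w1) (pm_basis m1)) (pm_tprod (Delta0_word w2) (pm_basis m2))"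
    unfolding pm_tprod_bil pm_bil_interchange ggbm_def ..
  finally show "LM (pm_basis (gbm a b)) = pm_bil ggbm (LM (pm_basis a)) (LM (pm_basis b))"
    by (simp add: ab)
qed

lemma TR_mult: "TR (pm_bil (\<lambda>(a, b) (c, d). (gbm a c, gbm b d)) x y) = pm_bil ggbm (TR x) (TR y)"
proof (rule pm_bil_mult[OF lin_TR])
  fix u v :: "(word \<times> mono) \<times> (word \<times> mono)"
  obtain a b c d where u: "u = ((a, b), (c, d))" by (metis prod.exhaust)
  obtain a' b' c' d' where v: "v = ((a', b'), (c', d'))" by (metis prod.exhaust)
  show "TR (pm_basis ((\<lambda>(a, b) (c, d). (gbm a c, gbm b d)) u v)) = pm_bil ggbm (TR (pm_basis u)) (TR (pm_basis v))"
    by (simp add: u v add_ac)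
qed

lemma RR_mult: "RR (pm_bil ggm x y) = pm_bil ggbm (RR x) (RR y)"
proof (rule pm_bil_mult[OF lin_RR])
  fix a b :: "word \<times> word"
  obtain a1 c1 a2 c2 where ab: "a = (a1, c1)" "b = (a2, c2)" by (cases a; cases b)
  have "RR (pm_basis (ggm a b)) = TR (pm_tprod (pm_bil gbm (rho_word a1) (rho_word a2)) (pm_bil gbm (rho_word c1) (rho_word c2)))"
    by (simp add: ab rho_word_append gb_mult_bil)
  also have "\<dots> = TR (pm_bil (\<lambda>(a, b) (c, d). (gbm a c, gbm b d)) (pm_tprod (rho_word a1) (rho_word c1)) (pm_tprod (rho_word a2) (rho_word c2)))"
    unfolding pm_tprod_bil pm_bil_interchange ..
  also have "\<dots> = pm_bil ggbm (RR (pm_basis a)) (RR (pm_basis b))"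
    by (simp add: TR_mult ab)
  finally show "RR (pm_basis (ggm a b)) = pm_bil ggbm (RR (pm_basis a)) (RR (pm_basis b))" .
qed


section \<open>Rank\<close>

lemma rank_mono: assumes "finite X" "a \<le> b" shows "rank X a \<le> rank X b"
  unfolding rank_def using assms by (intro card_mono) auto

lemma rank_less: assumes "finite X" "x \<in> X" "y < x" shows "rank X y < rank X x"
proof -
  have s: "{z\<in>X. z \<le> y} \<subseteq> {z\<in>X. z \<le> x}" using assms by auto
  have n: "{z\<in>X. z \<le> y} \<noteq> {z\<in>X. z \<le> x}"
  proof
    assume eq: "{z\<in>X. z \<le> y} = {z\<in>X. z \<le> x}"
    have "x \<in> {z\<in>X. z \<le> x}" using assms by simp
    then have "x \<in> {z\<in>X. z \<le> y}" by (simp only: eq)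
    then show False using assms by simp
  qed
  show ?thesis unfolding rank_def using s n assms(1) by (intro psubset_card_mono) auto
qed

lemma rank_le_card: "finite X \<Longrightarrow> rank X y \<le> card X"
  unfolding rank_def by (intro card_mono) auto

lemma rank_pos: "finite X \<Longrightarrow> x \<in> X \<Longrightarrow> 0 < rank X x"
  unfolding rank_def by (subst card_gt_0_iff) auto

lemma rank_less_iff: assumes "finite X" "x \<in> X" "y \<in> X" shows "rank X x < rank X y \<longleftrightarrow> x < y"
proof
  assume "rank X x < rank X y"
  then show "x < y" using rank_mono[OF assms(1), of y x] by (cases "x < y") auto
next
  assume "x < y" then show "rank X x < rank X y" by (rule rank_less[OF assms(1) assms(3)])
qed

lemma rank_inj: assumes "finite X" shows "inj_on (rank X) X"
proof (rule inj_onI)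
  fix x y assume xy: "x \<in> X" "y \<in> X" "rank X x = rank X y"
  show "x = y"
  proof (rule ccontr)
    assume "x \<noteq> y"
    then have "x < y \<or> y < x" by auto
    then show False
    proof
      assume "x < y" then show False using rank_less[OF assms xy(2), of x] xy(3) by simp
    next
      assume "y < x" then show False using rank_less[OF assms xy(1), of y] xy(3) by simp
    qed
  qed
qed

lemma rank_image: assumes "finite X" shows "rank X ` X = {1..card X}"
proof (rule card_subset_eq)
  show "rank X ` X \<subseteq> {1..card X}"
    using rank_pos[OF assms] rank_le_card[OF assms] by (auto simp: Suc_le_eq)
  show "card (rank X ` X) = card {1..card X}"
    using card_image[OF rank_inj[OF assms]] by simp
qed simp

lemma rank_iso:
  fixes f :: "nat \<Rightarrow> nat"
  assumes mono: "\<And>a b. a \<in> Z \<Longrightarrow> b \<in> Z \<Longrightarrow> a < b \<Longrightarrow> f a < f b" and z: "z \<in> Z"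
  shows "rank (f ` Z) (f z) = rank Z z"
proof -
  have inj: "inj_on f Z"
  proof (rule inj_onI)
    fix x y assume xy: "x \<in> Z" "y \<in> Z" "f x = f y"
    show "x = y"
    proof (rule ccontr)
      assume "x \<noteq> y"
      then have "x < y \<or> y < x" by auto
      then show False using mono[OF xy(1) xy(2)] mono[OF xy(2) xy(1)] xy(3) by auto
    qed
  qed
  have "{w \<in> f ` Z. w \<le> f z} = f ` {w \<in> Z. w \<le> z}"
  proof (intro set_eqI iffI)
    fix w assume "w \<in> {w \<in> f ` Z. w \<le> f z}"
    then obtain a where a: "a \<in> Z" "w = f a" "f a \<le> f z" by auto
    then have "a \<le> z" using mono[OF z a(1)] by (meson not_le)
    then show "w \<in> f ` {w \<in> Z. w \<le> z}" using a by auto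
  next
    fix w assume "w \<in> f ` {w \<in> Z. w \<le> z}"
    then obtain a where a: "a \<in> Z" "w = f a" "a \<le> z" by auto
    then have "f a \<le> f z" using mono[OF a(1) z] by (cases "a = z") auto
    then show "w \<in> {w \<in> f ` Z. w \<le> f z}" using a by auto
  qed
  then show ?thesis unfolding rank_def
    by (simp add: card_image inj_on_subset[OF inj])
qed

lemma rank_nth:
  assumes "finite X" "j < card X"
  shows "sorted_list_of_set X ! j \<in> X" "rank X (sorted_list_of_set X ! j) = Suc j"
proof -
  let ?s = "sorted_list_of_set X"
  have len: "length ?s = card X" by simp
  have set: "set ?s = X" using assms by simp
  have sw: "sorted_wrt (<) ?s" by (simp add: strict_sorted_list_of_set)
  show "?s ! j \<in> X" using assms set len by (metis nth_mem)
  have X: "X = (!) ?s ` {0..<card X}"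
    using set len nth_image[of "card X" ?s] by simp
  have mono: "\<And>a b. a \<in> {0..<card X} \<Longrightarrow> b \<in> {0..<card X} \<Longrightarrow> a < b \<Longrightarrow> ?s ! a < ?s ! b"
    using sw len by (auto intro: sorted_wrt_nth_less)
  have "rank X (?s ! j) = rank ((!) ?s ` {0..<card X}) (?s ! j)" using X by simp
  also have "\<dots> = rank {0..<card X} j" using assms by (intro rank_iso mono) auto
  also have "\<dots> = Suc j"
  proof -
    have "{z \<in> {0..<card X}. z \<le> j} = {0..j}" using assms by auto
    then show ?thesis by (simp add: rank_def)
  qed
  finally show "rank X (?s ! j) = Suc j" .
qed

lemma gap_char:
  assumes "finite X" "i \<le> card X"
  shows "gap P X i = {y \<in> {1..deg P}. y \<notin> X \<and> rank X y = i}"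
proof -
  let ?s = "sorted_list_of_set X"
  have key: "((i = 0 \<or> ?s ! (i - 1) < y) \<and> (i = card X \<or> y < ?s ! i)) \<longleftrightarrow> (y \<notin> X \<and> rank X y = i)" for y
  proof
    assume h: "(i = 0 \<or> ?s ! (i - 1) < y) \<and> (i = card X \<or> y < ?s ! i)"
    have ge: "i \<le> rank X y"
    proof (cases "i = 0")
      case False
      then have "?s ! (i - 1) < y" using h by auto
      moreover have "rank X (?s ! (i - 1)) = i" using rank_nth[OF assms(1), of "i - 1"] False assms by auto
      ultimately show ?thesis using rank_mono[OF assms(1), of "?s ! (i - 1)" y] by auto
    qed simp
    have le: "rank X y \<le> i"
    proof (cases "i = card X")
      case True then show ?thesis using rank_le_card[OF assms(1)] by simp
    next
      case False
      then have "y < ?s ! i" "i < card X" using h assms by auto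
      then show ?thesis using rank_less[OF assms(1) rank_nth(1)[OF assms(1)], of i y] rank_nth(2)[OF assms(1), of i] by auto
    qed
    have r: "rank X y = i" using ge le by simp
    have "y \<notin> X"
    proof
      assume y: "y \<in> X"
      show False
      proof (cases "i = 0")
        case True then show False using rank_pos[OF assms(1) y] r by simp
      next
        case False
        then have "rank X (?s ! (i - 1)) = rank X y" "?s ! (i - 1) \<in> X"
          using rank_nth[OF assms(1), of "i - 1"] assms r by auto
        then have "?s ! (i - 1) = y" using rank_inj[OF assms(1)] y by (auto dest: inj_onD)
        then show False using h False by auto
      qed
    qed
    then show "y \<notin> X \<and> rank X y = i" using r by simp
  next
    assume h: "y \<notin> X \<and> rank X y = i"
    have 1: "i = 0 \<or> ?s ! (i - 1) < y"
    proof (cases "i = 0")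
      case True then show ?thesis by simp
    next
      case False
      then have m: "?s ! (i - 1) \<in> X" "rank X (?s ! (i - 1)) = i" using rank_nth[OF assms(1), of "i - 1"] assms by auto
      have "?s ! (i - 1) < y"
      proof (rule ccontr)
        assume "\<not> ?s ! (i - 1) < y"
        then have "y < ?s ! (i - 1)" using h m by (metis linorder_neqE_nat)
        then have "rank X y < rank X (?s ! (i - 1))" by (rule rank_less[OF assms(1) m(1)])
        then show False using m h by simp
      qed
      then show ?thesis by simp
    qed
    have 2: "i = card X \<or> y < ?s ! i"
    proof (cases "i = card X")
      case True then show ?thesis by simp
    next
      case False
      then have ic: "i < card X" using assms by simp
      have "y < ?s ! i"
      proof (rule ccontr)
        assume "\<not> y < ?s ! i"
        then have "rank X (?s ! i) \<le> rank X y" by (intro rank_mono[OF assms(1)]) simp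
        then show False using rank_nth(2)[OF assms(1) ic] h by simp
      qed
      then show ?thesis by simp
    qed
    show "(i = 0 \<or> ?s ! (i - 1) < y) \<and> (i = card X \<or> y < ?s ! i)" using 1 2 by simp
  qed
  show ?thesis unfolding gap_def using key by auto
qed

lemma gap_between:
  assumes "finite X" "y \<notin> X" "z \<notin> X" "rank X y = rank X z" "y \<le> x" "x \<le> z"
  shows "x \<notin> X \<and> rank X x = rank X y"
proof
  show r: "rank X x = rank X y"
    using rank_mono[OF assms(1) assms(5)] rank_mono[OF assms(1) assms(6)] assms(4) by simp
  show "x \<notin> X"
  proof
    assume x: "x \<in> X"
    then have "y < x" using assms(2,5) by (cases "y = x") auto
    then show False using rank_less[OF assms(1) x \<open>y < x\<close>] r by simp
  qed
qed

section \<open>Partitions\<close>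

lemma part_props:
  assumes "is_partition n P"
  shows "finite P" "\<And>B. B \<in> P \<Longrightarrow> B \<noteq> {}" "\<And>B. B \<in> P \<Longrightarrow> B \<subseteq> {1..n}"
    "\<And>B. B \<in> P \<Longrightarrow> finite B" "\<Union>P = {1..n}"
    "\<And>B C x. B \<in> P \<Longrightarrow> C \<in> P \<Longrightarrow> x \<in> B \<Longrightarrow> x \<in> C \<Longrightarrow> B = C"
proof -
  show "\<Union>P = {1..n}" using assms by (simp add: is_partition_def)
  then show sub: "\<And>B. B \<in> P \<Longrightarrow> B \<subseteq> {1..n}" by auto
  then have "P \<subseteq> Pow {1..n}" by auto
  then show "finite P" by (rule finite_subset) simp
  show "\<And>B. B \<in> P \<Longrightarrow> finite B" using sub finite_subset by blast
  show "\<And>B. B \<in> P \<Longrightarrow> B \<noteq> {}" using assms by (simp add: is_partition_def)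
  show "\<And>B C x. B \<in> P \<Longrightarrow> C \<in> P \<Longrightarrow> x \<in> B \<Longrightarrow> x \<in> C \<Longrightarrow> B = C"
    using assms unfolding is_partition_def by blast
qed

lemma part_deg: "is_partition n P \<Longrightarrow> deg P = n"
  by (simp add: deg_def is_partition_def)

lemma restr_partition:
  assumes P: "is_partition n P" and X: "X \<subseteq> {1..n}"
  shows "is_partition (card X) (restr P X)"
proof -
  have fX: "finite X" using X finite_subset by blast
  note inj = rank_inj[OF fX]
  show ?thesis unfolding is_partition_def
  proof (intro conjI ballI impI)
    fix B' assume "B' \<in> restr P X" then show "B' \<noteq> {}" by (auto simp: restr_def)
  next
    fix B' C' assume B': "B' \<in> restr P X" and C': "C' \<in> restr P X" and ne: "B' \<noteq> C'"
    obtain B where B: "B \<in> P" "B' = rank X ` (B \<inter> X)" using B' by (auto simp: restr_def)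
    obtain C where C: "C \<in> P" "C' = rank X ` (C \<inter> X)" using C' by (auto simp: restr_def)
    have "B \<noteq> C" using ne B C by auto
    then have "B \<inter> C = {}" using part_props(6)[OF P B(1) C(1)] by blast
    then have "rank X ` (B \<inter> X) \<inter> rank X ` (C \<inter> X) = rank X ` ((B \<inter> X) \<inter> (C \<inter> X))"
      using inj by (intro inj_on_image_Int[symmetric]) auto
    then show "B' \<inter> C' = {}" using B C \<open>B \<inter> C = {}\<close> by auto
  next
    have "\<Union>(restr P X) = rank X ` X"
    proof
      show "\<Union>(restr P X) \<subseteq> rank X ` X" by (auto simp: restr_def)
      show "rank X ` X \<subseteq> \<Union>(restr P X)"
      proof
        fix r assume "r \<in> rank X ` X"
        then obtain x where x: "x \<in> X" "r = rank X x" by auto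
        then have "x \<in> \<Union>P" using X part_props(5)[OF P] by auto
        then obtain B where B: "B \<in> P" "x \<in> B" by auto
        then have "rank X ` (B \<inter> X) \<in> restr P X" using x by (auto simp: restr_def)
        moreover have "r \<in> rank X ` (B \<inter> X)" using x B by auto
        ultimately show "r \<in> \<Union>(restr P X)" by blast
      qed
    qed
    then show "\<Union>(restr P X) = {1..card X}" using rank_image[OF fX] by simp
  qed
qed

lemma noncrossingD:
  assumes "noncrossing P" "B \<in> P" "C \<in> P" "B \<noteq> C" "a < c" "c < b" "b < d" "a \<in> B" "b \<in> B" "c \<in> C" "d \<in> C"
  shows False
proof -
  have "\<exists>B\<in>P. \<exists>C\<in>P. B \<noteq> C \<and> (\<exists>a b c d. a < c \<and> c < b \<and> b < d \<and> a \<in> B \<and> b \<in> B \<and> c \<in> C \<and> d \<in> C)"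
    apply (rule bexI[of _ B], rule bexI[of _ C])
      apply (rule conjI[OF assms(4)])
      apply (rule exI[of _ a], rule exI[of _ b], rule exI[of _ c], rule exI[of _ d])
    using assms(2-) by simp_all
  then show False using assms(1) unfolding noncrossing_def by (elim notE)
qed
lemma noncrossingI:
  assumes "\<And>B C a b c d. B \<in> P \<Longrightarrow> C \<in> P \<Longrightarrow> B \<noteq> C \<Longrightarrow> a < c \<Longrightarrow> c < b \<Longrightarrow> b < d \<Longrightarrow> a \<in> B \<Longrightarrow> b \<in> B \<Longrightarrow> c \<in> C \<Longrightarrow> d \<in> C \<Longrightarrow> False"
  shows "noncrossing P"
  unfolding noncrossing_def
proof (intro notI, elim bexE exE conjE)
  fix B C a b c d
  assume h: "B \<in> P" "C \<in> P" "B \<noteq> C" "a < c" "c < b" "b < d" "a \<in> B" "b \<in> B" "c \<in> C" "d \<in> C"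
  show False by (rule assms[OF h])
qed

lemma restr_noncrossing:
  assumes NC: "noncrossing P" and fX: "finite X"
  shows "noncrossing (restr P X)"
proof (rule noncrossingI)
  fix B' C' a b c d
  assume B': "B' \<in> restr P X" and C': "C' \<in> restr P X" and ne: "B' \<noteq> C'"
    and o: "a < c" "c < b" "b < d" and m: "a \<in> B'" "b \<in> B'" "c \<in> C'" "d \<in> C'"
  obtain B where B: "B \<in> P" "B' = rank X ` (B \<inter> X)" using B' by (auto simp: restr_def)
  obtain C where C: "C \<in> P" "C' = rank X ` (C \<inter> X)" using C' by (auto simp: restr_def)
  obtain a0 where a0: "a0 \<in> B \<inter> X" "a = rank X a0" using m(1) B(2) by blast
  obtain b0 where b0: "b0 \<in> B \<inter> X" "b = rank X b0" using m(2) B(2) by blast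
  obtain c0 where c0: "c0 \<in> C \<inter> X" "c = rank X c0" using m(3) C(2) by blast
  obtain d0 where d0: "d0 \<in> C \<inter> X" "d = rank X d0" using m(4) C(2) by blast
  have "a0 < c0" using rank_less_iff[OF fX, of a0 c0] o a0 c0 by simp
  moreover have "c0 < b0" using rank_less_iff[OF fX, of c0 b0] o b0 c0 by simp
  moreover have "b0 < d0" using rank_less_iff[OF fX, of b0 d0] o b0 d0 by simp
  moreover have "B \<noteq> C" using ne B C by auto
  ultimately show False using noncrossingD[OF NC B(1) C(1)] a0 b0 c0 d0 by blast
qed

lemma NC_restr:
  assumes "NC P" "X \<subseteq> \<Union>P"
  shows "NC (restr P X)"
proof -
  obtain n where n: "is_partition n P" "noncrossing P" using assms by (auto simp: NC_def)
  then have X: "X \<subseteq> {1..n}" using assms part_props(5)[OF n(1)] by simp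
  show ?thesis unfolding NC_def
    using restr_partition[OF n(1) X] restr_noncrossing[OF n(2)] finite_subset[OF X] by blast
qed

lemma deg_restr:
  assumes "is_partition n P" "X \<subseteq> {1..n}"
  shows "deg (restr P X) = card X"
  using part_deg[OF restr_partition[OF assms]] .

lemma restr_blocks:
  assumes P: "is_partition n P" and S: "S \<subseteq> P"
  shows "restr P (\<Union>S) = (\<lambda>B. rank (\<Union>S) ` B) ` S"
proof -
  have "{B \<in> P. B \<inter> \<Union>S \<noteq> {}} = S"
  proof (intro set_eqI iffI)
    fix B assume "B \<in> {B \<in> P. B \<inter> \<Union>S \<noteq> {}}"
    then obtain C x where "B \<in> P" "C \<in> S" "x \<in> B" "x \<in> C" by auto
    then show "B \<in> S" using part_props(6)[OF P] S by blast
  next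
    fix B assume "B \<in> S" then show "B \<in> {B \<in> P. B \<inter> \<Union>S \<noteq> {}}"
      using S part_props(2)[OF P] by blast
  qed
  moreover have "B \<inter> \<Union>S = B" if "B \<in> S" for B using that by blast
  ultimately show ?thesis unfolding restr_def by (auto intro!: image_cong)
qed

lemma restr_restr:
  assumes fY: "finite Y" and Z: "Z \<subseteq> Y"
  shows "restr (restr P Y) (rank Y ` Z) = restr P Z"
proof -
  note inj = rank_inj[OF fY]
  let ?Z' = "rank Y ` Z"
  have K1: "rank Y ` (B \<inter> Y) \<inter> ?Z' = rank Y ` (B \<inter> Z)" for B
  proof -
    have "rank Y ` (B \<inter> Y) \<inter> ?Z' = rank Y ` ((B \<inter> Y) \<inter> Z)"
      using inj Z by (intro inj_on_image_Int[symmetric]) auto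
    moreover have "B \<inter> Y \<inter> Z = B \<inter> Z" using Z by blast
    ultimately show ?thesis by simp
  qed
  have iso: "rank ?Z' (rank Y z) = rank Z z" if "z \<in> Z" for z
    using that Z by (intro rank_iso) (auto intro: rank_less_iff[OF fY, THEN iffD2])
  have K2: "rank ?Z' ` (rank Y ` (B \<inter> Z)) = rank Z ` (B \<inter> Z)" for B
    using iso by (auto simp: image_image intro!: image_cong)
  have "restr (restr P Y) ?Z' = (\<lambda>B. rank ?Z' ` (rank Y ` (B \<inter> Y) \<inter> ?Z')) ` {B \<in> P. B \<inter> Y \<noteq> {} \<and> rank Y ` (B \<inter> Y) \<inter> ?Z' \<noteq> {}}"
    unfolding restr_def by auto
  also have "\<dots> = (\<lambda>B. rank Z ` (B \<inter> Z)) ` {B \<in> P. B \<inter> Z \<noteq> {}}"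
    unfolding K1 K2 using Z by (intro arg_cong[where f="image _"]) auto
  finally show ?thesis by (simp add: restr_def)
qed

section \<open>Lifting\<close>

definition lift :: "nat set \<Rightarrow> part \<Rightarrow> part" where
  "lift Y R = (\<lambda>B. {y \<in> Y. rank Y y \<in> B}) ` R"

lemma lift_img: "finite Y \<Longrightarrow> B \<subseteq> Y \<Longrightarrow> {y \<in> Y. rank Y y \<in> rank Y ` B} = B"
  using rank_inj by (auto dest: inj_onD)

lemma lift_restr: "finite Y \<Longrightarrow> (\<And>B. B \<in> S \<Longrightarrow> B \<subseteq> Y) \<Longrightarrow> lift Y ((\<lambda>B. rank Y ` B) ` S) = S"
  unfolding lift_def image_image by (simp add: lift_img)

lemma img_lift: assumes "finite Y" "B \<subseteq> {1..card Y}" shows "rank Y ` {y \<in> Y. rank Y y \<in> B} = B"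
proof -
  have "rank Y ` {y \<in> Y. rank Y y \<in> B} = rank Y ` Y \<inter> B" by auto
  then show ?thesis using rank_image[OF assms(1)] assms(2) by auto
qed

lemma img_lift_all: "finite Y \<Longrightarrow> \<Union>R \<subseteq> {1..card Y} \<Longrightarrow> (\<lambda>B. rank Y ` B) ` (lift Y R) = R"
  unfolding lift_def image_image by (subst image_cong[OF refl img_lift]) auto

lemma lift_sub: "\<tau> \<in> lift Y R \<Longrightarrow> \<tau> \<subseteq> Y"
  by (auto simp: lift_def)

lemma lift_partition:
  assumes fY: "finite Y" and R: "is_partition (card Y) R"
  shows "\<And>\<tau>. \<tau> \<in> lift Y R \<Longrightarrow> \<tau> \<noteq> {}"
    "\<And>\<tau>1 \<tau>2. \<tau>1 \<in> lift Y R \<Longrightarrow> \<tau>2 \<in> lift Y R \<Longrightarrow> \<tau>1 \<noteq> \<tau>2 \<Longrightarrow> \<tau>1 \<inter> \<tau>2 = {}"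
    "\<Union>(lift Y R) = Y"
proof -
  have img: "rank Y ` Y = {1..card Y}" by (rule rank_image[OF fY])
  show "\<tau> \<noteq> {}" if t: "\<tau> \<in> lift Y R" for \<tau>
  proof -
    obtain B where B: "B \<in> R" "\<tau> = {y \<in> Y. rank Y y \<in> B}" using t unfolding lift_def by blast
    obtain x where "x \<in> B" using part_props(2)[OF R B(1)] by auto
    then have "x \<in> rank Y ` Y" using part_props(3)[OF R B(1)] img by auto
    then show ?thesis using B \<open>x \<in> B\<close> by auto
  qed
  show "\<tau>1 \<inter> \<tau>2 = {}" if t: "\<tau>1 \<in> lift Y R" "\<tau>2 \<in> lift Y R" "\<tau>1 \<noteq> \<tau>2" for \<tau>1 \<tau>2
  proof -
    obtain B1 where B1: "B1 \<in> R" "\<tau>1 = {y \<in> Y. rank Y y \<in> B1}" using t unfolding lift_def by blast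
    obtain B2 where B2: "B2 \<in> R" "\<tau>2 = {y \<in> Y. rank Y y \<in> B2}" using t unfolding lift_def by blast
    have "B1 \<noteq> B2" using t B1 B2 by auto
    then have "B1 \<inter> B2 = {}" using part_props(6)[OF R B1(1) B2(1)] by blast
    then show ?thesis using B1 B2 by auto
  qed
  show "\<Union>(lift Y R) = Y"
  proof
    show "\<Union>(lift Y R) \<subseteq> Y" by (auto simp: lift_def)
    show "Y \<subseteq> \<Union>(lift Y R)"
    proof
      fix y assume y: "y \<in> Y"
      then have "rank Y y \<in> \<Union>R" using img part_props(5)[OF R] by auto
      then obtain B where "B \<in> R" "rank Y y \<in> B" by auto
      then show "y \<in> \<Union>(lift Y R)" using y by (auto simp: lift_def)
    qed
  qed
qed

lemma lift_noncrossing: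
  assumes fY: "finite Y" and NC: "noncrossing R"
  shows "noncrossing (lift Y R)"
proof (rule noncrossingI)
  fix \<tau>1 \<tau>2 a b c d
  assume t1: "\<tau>1 \<in> lift Y R" and t2: "\<tau>2 \<in> lift Y R" and ne: "\<tau>1 \<noteq> \<tau>2"
    and o: "a < c" "c < b" "b < d" and m: "a \<in> \<tau>1" "b \<in> \<tau>1" "c \<in> \<tau>2" "d \<in> \<tau>2"
  obtain B1 where B1: "B1 \<in> R" "\<tau>1 = {y \<in> Y. rank Y y \<in> B1}" using t1 unfolding lift_def by blast
  obtain B2 where B2: "B2 \<in> R" "\<tau>2 = {y \<in> Y. rank Y y \<in> B2}" using t2 unfolding lift_def by blast
  have "B1 \<noteq> B2" using ne B1 B2 by auto
  have s1: "a \<in> Y" "b \<in> Y" "c \<in> Y" "d \<in> Y" using B1 B2 m by auto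
  have "rank Y a < rank Y c" using rank_less_iff[OF fY, of a c] o s1 by auto
  moreover have "rank Y c < rank Y b" using rank_less_iff[OF fY, of c b] o s1 by auto
  moreover have "rank Y b < rank Y d" using rank_less_iff[OF fY, of b d] o s1 by auto
  moreover have "rank Y a \<in> B1" "rank Y b \<in> B1" "rank Y c \<in> B2" "rank Y d \<in> B2" using m B1 B2 by auto
  ultimately show False using noncrossingD[OF NC B1(1) B2(1) \<open>B1 \<noteq> B2\<close>] by blast
qed

lemma lowerset_iff:
  assumes Q: "is_partition n Q"
  shows "lowerset Q L \<longleftrightarrow> L \<subseteq> Q \<and> (\<forall>\<sigma>\<in>Q. \<sigma> \<notin> L \<longrightarrow> Conv \<sigma> \<inter> \<Union>L = {})"
proof
  assume l: "lowerset Q L"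
  then have sub: "L \<subseteq> Q" by (simp add: lowerset_def)
  have "Conv \<sigma> \<inter> \<Union>L = {}" if s: "\<sigma> \<in> Q" "\<sigma> \<notin> L" for \<sigma>
  proof (rule ccontr)
    assume "Conv \<sigma> \<inter> \<Union>L \<noteq> {}"
    then obtain \<pi> where p: "\<pi> \<in> L" "Conv \<sigma> \<inter> \<pi> \<noteq> {}" by auto
    then have "(\<sigma>, \<pi>) \<in> {(\<pi>, \<sigma>). \<pi> \<in> Q \<and> \<sigma> \<in> Q \<and> Conv \<pi> \<inter> \<sigma> \<noteq> {}}" using s sub by auto
    then have "arrow Q \<sigma> \<pi>" unfolding arrow_def by (rule r_into_trancl)
    then show False using l p s unfolding lowerset_def by blast
  qed
  then show "L \<subseteq> Q \<and> (\<forall>\<sigma>\<in>Q. \<sigma> \<notin> L \<longrightarrow> Conv \<sigma> \<inter> \<Union>L = {})" using sub by blast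
next
  assume h: "L \<subseteq> Q \<and> (\<forall>\<sigma>\<in>Q. \<sigma> \<notin> L \<longrightarrow> Conv \<sigma> \<inter> \<Union>L = {})"
  let ?r = "{(\<pi>, \<sigma>). \<pi> \<in> Q \<and> \<sigma> \<in> Q \<and> Conv \<pi> \<inter> \<sigma> \<noteq> {}}"
  have onestep: "\<sigma> \<in> L" if "(\<sigma>, \<pi>) \<in> ?r" "\<pi> \<in> L" for \<sigma> \<pi>
  proof (rule ccontr)
    assume "\<sigma> \<notin> L"
    then have "Conv \<sigma> \<inter> \<Union>L = {}" using h that by auto
    then show False using that by auto
  qed
  have "\<sigma> \<in> L" if "(\<sigma>, \<pi>) \<in> ?r\<^sup>+" "\<pi> \<in> L" for \<sigma> \<pi>
    using that(1,2)
  proof (induction rule: converse_trancl_induct)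
    case (base y)
    then show ?case using onestep by blast
  next
    case (step y z)
    then show ?case using onestep[of y z] by blast
  qed
  then show "lowerset Q L" using h unfolding lowerset_def arrow_def by blast
qed

lemma conv_rank:
  assumes fX: "finite X" and fs: "finite \<sigma>" "\<sigma> \<noteq> {}" and dj: "\<sigma> \<inter> X = {}"
  shows "Conv \<sigma> \<inter> X = {} \<longleftrightarrow> (\<exists>i. \<forall>y\<in>\<sigma>. rank X y = i)"
proof
  assume c: "Conv \<sigma> \<inter> X = {}"
  have "{z \<in> X. z \<le> Max \<sigma>} = {z \<in> X. z \<le> Min \<sigma>}"
  proof (intro set_eqI iffI)
    fix z assume z: "z \<in> {z \<in> X. z \<le> Max \<sigma>}"
    show "z \<in> {z \<in> X. z \<le> Min \<sigma>}"
    proof (rule ccontr)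
      assume "z \<notin> {z \<in> X. z \<le> Min \<sigma>}"
      then have "z \<in> Conv \<sigma>" using z by (auto simp: Conv_def)
      then show False using c z by auto
    qed
  next
    fix z assume "z \<in> {z \<in> X. z \<le> Min \<sigma>}"
    moreover have "Min \<sigma> \<le> Max \<sigma>" using fs by (simp add: Max_ge)
    ultimately show "z \<in> {z \<in> X. z \<le> Max \<sigma>}" by simp
  qed
  then have eq: "rank X (Max \<sigma>) = rank X (Min \<sigma>)" by (simp add: rank_def)
  have "\<forall>y\<in>\<sigma>. rank X y = rank X (Min \<sigma>)"
  proof
    fix y assume y: "y \<in> \<sigma>"
    have "rank X (Min \<sigma>) \<le> rank X y" using y fs by (intro rank_mono[OF fX]) simp
    moreover have "rank X y \<le> rank X (Max \<sigma>)" using y fs by (intro rank_mono[OF fX]) simp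
    ultimately show "rank X y = rank X (Min \<sigma>)" using eq by simp
  qed
  then show "\<exists>i. \<forall>y\<in>\<sigma>. rank X y = i" by blast
next
  assume "\<exists>i. \<forall>y\<in>\<sigma>. rank X y = i"
  then obtain i where i: "\<And>y. y \<in> \<sigma> \<Longrightarrow> rank X y = i" by blast
  have mn: "Min \<sigma> \<in> \<sigma>" "Max \<sigma> \<in> \<sigma>" using fs by auto
  show "Conv \<sigma> \<inter> X = {}"
  proof (rule ccontr)
    assume "Conv \<sigma> \<inter> X \<noteq> {}"
    then obtain x where x: "x \<in> X" "Min \<sigma> \<le> x" "x \<le> Max \<sigma>" by (auto simp: Conv_def)
    have "Min \<sigma> \<noteq> x" using x mn dj by auto
    then have "rank X (Min \<sigma>) < rank X x" using x by (intro rank_less[OF fX]) auto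
    moreover have "rank X x \<le> rank X (Max \<sigma>)" using x by (intro rank_mono[OF fX])
    ultimately show False using i mn by fastforce
  qed
qed

lemma lowerset_rank_iff:
  assumes Q: "is_partition n Q"
  shows "lowerset Q L \<longleftrightarrow> L \<subseteq> Q \<and> (\<forall>\<sigma>\<in>Q. \<sigma> \<notin> L \<longrightarrow> (\<exists>i. \<forall>y\<in>\<sigma>. rank (\<Union>L) y = i))"
proof -
  have "Conv \<sigma> \<inter> \<Union>L = {} \<longleftrightarrow> (\<exists>i. \<forall>y\<in>\<sigma>. rank (\<Union>L) y = i)" if "L \<subseteq> Q" "\<sigma> \<in> Q" "\<sigma> \<notin> L" for \<sigma>
  proof (rule conv_rank)
    have "finite L" using that(1) part_props(1)[OF Q] finite_subset by blast
    moreover have "\<forall>B\<in>L. finite B" using that(1) part_props(4)[OF Q] by blast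
    ultimately show "finite (\<Union>L)" by (intro finite_Union) auto
    show "finite \<sigma>" "\<sigma> \<noteq> {}" using that part_props(2,4)[OF Q] by auto
    show "\<sigma> \<inter> \<Union>L = {}" using that part_props(6)[OF Q] by blast
  qed
  note eq = this
  show ?thesis
  proof
    assume "lowerset Q L"
    then have LQ: "L \<subseteq> Q" and cv: "\<And>\<sigma>. \<sigma> \<in> Q \<Longrightarrow> \<sigma> \<notin> L \<Longrightarrow> Conv \<sigma> \<inter> \<Union>L = {}"
      using lowerset_iff[OF Q] by auto
    show "L \<subseteq> Q \<and> (\<forall>\<sigma>\<in>Q. \<sigma> \<notin> L \<longrightarrow> (\<exists>i. \<forall>y\<in>\<sigma>. rank (\<Union>L) y = i))"
    proof (intro conjI ballI impI LQ)
      fix \<sigma> assume "\<sigma> \<in> Q" "\<sigma> \<notin> L"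
      then show "\<exists>i. \<forall>y\<in>\<sigma>. rank (\<Union>L) y = i" using eq[OF LQ] cv by blast
    qed
  next
    assume h: "L \<subseteq> Q \<and> (\<forall>\<sigma>\<in>Q. \<sigma> \<notin> L \<longrightarrow> (\<exists>i. \<forall>y\<in>\<sigma>. rank (\<Union>L) y = i))"
    have "\<forall>\<sigma>\<in>Q. \<sigma> \<notin> L \<longrightarrow> Conv \<sigma> \<inter> \<Union>L = {}"
    proof (intro ballI impI)
      fix \<sigma> assume "\<sigma> \<in> Q" "\<sigma> \<notin> L"
      then show "Conv \<sigma> \<inter> \<Union>L = {}" using eq[of \<sigma>] h by blast
    qed
    then show "lowerset Q L" using lowerset_iff[OF Q] h by blast
  qed
qed

section \<open>Splitting a partition along a lowerset\<close>

lemma split_lowerset: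
  assumes Q: "is_partition n Q" and L: "lowerset Q L"
  defines "X \<equiv> \<Union>L"
  shows "finite X" "X \<subseteq> {1..n}"
    "\<And>\<tau>. \<tau> \<in> Q \<Longrightarrow> \<tau> \<notin> L \<Longrightarrow> \<exists>i\<le>card X. \<tau> \<subseteq> gap Q X i"
    "L = {\<tau> \<in> Q. \<tau> \<subseteq> X}"
    "\<And>\<tau>. \<tau> \<in> Q \<Longrightarrow> \<tau> \<notin> L \<Longrightarrow> \<tau> \<inter> X = {}"
proof -
  have LQ: "L \<subseteq> Q" using L by (simp add: lowerset_def)
  show sub: "X \<subseteq> {1..n}" using LQ part_props(3)[OF Q] X_def by blast
  then show fX: "finite X" using finite_subset by blast
  show dj: "\<tau> \<inter> X = {}" if "\<tau> \<in> Q" "\<tau> \<notin> L" for \<tau>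
    using that LQ part_props(6)[OF Q] X_def by blast
  show "\<exists>i\<le>card X. \<tau> \<subseteq> gap Q X i" if t: "\<tau> \<in> Q" "\<tau> \<notin> L" for \<tau>
  proof -
    have "L \<subseteq> Q \<and> (\<forall>\<sigma>\<in>Q. \<sigma> \<notin> L \<longrightarrow> (\<exists>i. \<forall>y\<in>\<sigma>. rank (\<Union>L) y = i))"
      using lowerset_rank_iff[OF Q, THEN iffD1, OF L] .
    then have "\<exists>i. \<forall>y\<in>\<tau>. rank X y = i" using t unfolding X_def by blast
    then obtain i where i: "\<And>y. y \<in> \<tau> \<Longrightarrow> rank X y = i" by blast
    obtain y where y: "y \<in> \<tau>" using part_props(2)[OF Q t(1)] by blast
    have ic: "i \<le> card X" using i[OF y] rank_le_card[OF fX] by metis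
    have "\<tau> \<subseteq> gap Q X i"
    proof
      fix y assume y: "y \<in> \<tau>"
      then have "y \<in> {1..n}" "y \<notin> X" "rank X y = i" using i dj[OF t] part_props(3)[OF Q t(1)] by auto
      then show "y \<in> gap Q X i" unfolding gap_char[OF fX ic] part_deg[OF Q] by simp
    qed
    then show ?thesis using ic by blast
  qed
  show "L = {\<tau> \<in> Q. \<tau> \<subseteq> X}"
  proof (intro set_eqI iffI)
    fix \<tau> assume "\<tau> \<in> L" then show "\<tau> \<in> {\<tau> \<in> Q. \<tau> \<subseteq> X}" using LQ X_def by blast
  next
    fix \<tau> assume t: "\<tau> \<in> {\<tau> \<in> Q. \<tau> \<subseteq> X}"
    show "\<tau> \<in> L"
    proof (rule ccontr)
      assume "\<tau> \<notin> L"
      then have "\<tau> \<inter> X = {}" using dj t by blast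
      then show False using t part_props(2)[OF Q] by blast
    qed
  qed
qed

lemma gap_facts:
  assumes fX: "finite X" and sub: "X \<subseteq> {1..n}" and dP: "deg Q = n"
  shows "\<And>i. i \<le> card X \<Longrightarrow> gap Q X i \<subseteq> {1..n} - X"
    "\<And>i j. i \<le> card X \<Longrightarrow> j \<le> card X \<Longrightarrow> i \<noteq> j \<Longrightarrow> gap Q X i \<inter> gap Q X j = {}"
    "\<And>y. y \<in> {1..n} \<Longrightarrow> y \<notin> X \<Longrightarrow> y \<in> gap Q X (rank X y)"
    "\<And>i y. i \<le> card X \<Longrightarrow> y \<in> gap Q X i \<Longrightarrow> rank X y = i \<and> y \<notin> X"
proof -
  show "gap Q X i \<subseteq> {1..n} - X" if "i \<le> card X" for i
    using gap_char[OF fX that] dP by auto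
  show "gap Q X i \<inter> gap Q X j = {}" if "i \<le> card X" "j \<le> card X" "i \<noteq> j" for i j
    using gap_char[OF fX that(1)] gap_char[OF fX that(2)] that(3) by auto
  show "y \<in> gap Q X (rank X y)" if "y \<in> {1..n}" "y \<notin> X" for y
    using gap_char[OF fX rank_le_card[OF fX, of y]] dP that by auto
  show "rank X y = i \<and> y \<notin> X" if "i \<le> card X" "y \<in> gap Q X i" for i y
    using gap_char[OF fX that(1)] that(2) by auto
qed

lemma gap_deg: "deg Q = deg P \<Longrightarrow> gap Q X i = gap P X i"
  by (simp add: gap_def)

lemma split_union:
  assumes Q: "is_partition n Q" and L: "lowerset Q L"
  shows "Q = L \<union> (\<Union>i\<in>{..card (\<Union>L)}. {\<tau> \<in> Q. \<tau> \<subseteq> gap Q (\<Union>L) i})"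
proof -
  have LQ: "L \<subseteq> Q" using L by (simp add: lowerset_def)
  show ?thesis using split_lowerset(3)[OF Q L] LQ by auto
qed

lemma split_gap_union:
  assumes Q: "is_partition n Q" and L: "lowerset Q L" and i: "i \<le> card (\<Union>L)"
  shows "gap Q (\<Union>L) i = \<Union>{\<tau> \<in> Q. \<tau> \<subseteq> gap Q (\<Union>L) i}"
proof
  let ?X = "\<Union>L"
  note f = split_lowerset[OF Q L]
  note g = gap_facts[OF f(1) f(2) part_deg[OF Q]]
  show "gap Q ?X i \<subseteq> \<Union>{\<tau> \<in> Q. \<tau> \<subseteq> gap Q ?X i}"
  proof
    fix y assume y: "y \<in> gap Q ?X i"
    then have yn: "y \<in> {1..n}" "y \<notin> ?X" using g(1)[OF i] by auto
    then obtain \<tau> where t: "\<tau> \<in> Q" "y \<in> \<tau>" using part_props(5)[OF Q] by blast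
    then have tL: "\<tau> \<notin> L" using yn by blast
    obtain j where j: "j \<le> card ?X" "\<tau> \<subseteq> gap Q ?X j" using f(3)[OF t(1) tL] by blast
    have "j = i" using g(2)[OF i j(1)] y t j by blast
    then show "y \<in> \<Union>{\<tau> \<in> Q. \<tau> \<subseteq> gap Q ?X i}" using t j by blast
  qed
qed blast

section \<open>Coarsenings\<close>

lemma coarser_props:
  assumes P: "is_partition n P" and Q: "Q \<in> coarser_NC P"
  shows "is_partition n Q" "noncrossing Q" "\<And>\<tau>. \<tau> \<in> Q \<Longrightarrow> \<tau> = \<Union>{\<sigma> \<in> P. \<sigma> \<subseteq> \<tau>}"
    "\<And>\<sigma>. \<sigma> \<in> P \<Longrightarrow> \<exists>\<tau>\<in>Q. \<sigma> \<subseteq> \<tau>"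
proof -
  show Qp: "is_partition n Q" using Q part_deg[OF P] by (simp add: coarser_NC_def)
  show "noncrossing Q" using Q by (simp add: coarser_NC_def)
  have ref: "\<And>\<tau>. \<tau> \<in> Q \<Longrightarrow> \<exists>S\<subseteq>P. \<tau> = \<Union>S" using Q by (simp add: coarser_NC_def refines_def)
  show "\<tau> = \<Union>{\<sigma> \<in> P. \<sigma> \<subseteq> \<tau>}" if t: "\<tau> \<in> Q" for \<tau>
  proof -
    obtain S where "S \<subseteq> P" "\<tau> = \<Union>S" using ref[OF t] by blast
    then show ?thesis by blast
  qed
  show "\<exists>\<tau>\<in>Q. \<sigma> \<subseteq> \<tau>" if s: "\<sigma> \<in> P" for \<sigma>
  proof -
    obtain y where y: "y \<in> \<sigma>" using part_props(2)[OF P s] by blast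
    then have "y \<in> \<Union>Q" using part_props(5)[OF P] part_props(5)[OF Qp] s by blast
    then obtain \<tau> where t: "\<tau> \<in> Q" "y \<in> \<tau>" by blast
    obtain S where S: "S \<subseteq> P" "\<tau> = \<Union>S" using ref[OF t(1)] by blast
    then obtain \<sigma>' where "\<sigma>' \<in> S" "y \<in> \<sigma>'" using t by blast
    then have "\<sigma>' = \<sigma>" using part_props(6)[OF P] S s y by blast
    then show ?thesis using t S \<open>\<sigma>' \<in> S\<close> by blast
  qed
qed

lemma restr_coarser:
  assumes P: "is_partition n P" and Q: "Q \<in> coarser_NC P" and Y: "Y \<subseteq> {1..n}"
    and YQ: "Y = \<Union>{\<tau> \<in> Q. \<tau> \<subseteq> Y}"
  shows "restr Q Y \<in> coarser_NC (restr P Y)"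
proof -
  note cq = coarser_props[OF P Q]
  have fY: "finite Y" using Y finite_subset by blast
  have rQ0: "restr Q (\<Union>{\<tau> \<in> Q. \<tau> \<subseteq> Y}) = (\<lambda>B. rank (\<Union>{\<tau> \<in> Q. \<tau> \<subseteq> Y}) ` B) ` {\<tau> \<in> Q. \<tau> \<subseteq> Y}"
    by (rule restr_blocks[OF cq(1)]) blast
  have rQ: "restr Q Y = (\<lambda>B. rank Y ` B) ` {\<tau> \<in> Q. \<tau> \<subseteq> Y}"
    using rQ0 by (simp only: YQ[symmetric])
  have ref: "refines (restr P Y) (restr Q Y)"
    unfolding refines_def
  proof
    fix \<tau>' assume "\<tau>' \<in> restr Q Y"
    then obtain \<tau> where t: "\<tau> \<in> Q" "\<tau> \<subseteq> Y" "\<tau>' = rank Y ` \<tau>" using rQ by blast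
    let ?S = "{\<sigma> \<in> P. \<sigma> \<subseteq> \<tau>}"
    have "\<tau> = \<Union>?S" using cq(3)[OF t(1)] .
    then have "rank Y ` \<tau> = \<Union>((\<lambda>B. rank Y ` B) ` ?S)" by (metis image_Union)
    then have "\<tau>' = \<Union>((\<lambda>B. rank Y ` B) ` ?S)" using t(3) by simp
    moreover have "(\<lambda>B. rank Y ` B) ` ?S \<subseteq> restr P Y"
    proof
      fix B' assume "B' \<in> (\<lambda>B. rank Y ` B) ` ?S"
      then obtain \<sigma> where s: "\<sigma> \<in> P" "\<sigma> \<subseteq> \<tau>" "B' = rank Y ` \<sigma>" by blast
      then have "\<sigma> \<inter> Y = \<sigma>" "\<sigma> \<noteq> {}" using t(2) part_props(2)[OF P] by auto
      then show "B' \<in> restr P Y" unfolding restr_def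
        by (intro image_eqI[where x=\<sigma>]) (use s in auto)
    qed
    ultimately show "\<exists>S\<subseteq>restr P Y. \<tau>' = \<Union>S" by blast
  qed
  show ?thesis unfolding coarser_NC_def
    using restr_partition[OF cq(1) Y] restr_noncrossing[OF cq(2) fY] ref deg_restr[OF P Y] by simp
qed

lemma listset_iff: "xs \<in> listset As \<longleftrightarrow> length xs = length As \<and> (\<forall>i<length As. xs ! i \<in> As ! i)"
proof (induction As arbitrary: xs)
  case Nil
  then show ?case by simp
next
  case (Cons A As)
  show ?case
  proof (cases xs)
    case Nil
    then show ?thesis by (simp add: set_Cons_def)
  next
    case (Cons x xs')
    have "x # xs' \<in> listset (A # As) \<longleftrightarrow> x \<in> A \<and> xs' \<in> listset As" by (auto simp: set_Cons_def)
    also have "\<dots> \<longleftrightarrow> length (x # xs') = length (A # As) \<and> (\<forall>i<length (A # As). (x # xs') ! i \<in> (A # As) ! i)"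
      using Cons.IH by (auto simp: nth_Cons' split: if_splits)
    finally show ?thesis using Cons by simp
  qed
qed

lemma between_gap:
  assumes fX: "finite X" and i: "i \<le> card X" and a: "a \<in> gap Q X i" and b: "b \<in> gap Q X i"
    and ac: "a \<le> c" and cb: "c \<le> b"
  shows "c \<in> gap Q X i"
proof -
  have A: "a \<in> {1..deg Q}" "a \<notin> X" "rank X a = i" using a unfolding gap_char[OF fX i] by auto
  have B: "b \<in> {1..deg Q}" "b \<notin> X" "rank X b = i" using b unfolding gap_char[OF fX i] by auto
  have "c \<notin> X \<and> rank X c = rank X a" using gap_between[OF fX A(2) B(2) _ ac cb] A B by simp
  moreover have "c \<in> {1..deg Q}" using A B ac cb by auto
  ultimately show ?thesis unfolding gap_char[OF fX i] using A by simp
qed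

lemma lift_refines:
  assumes P: "is_partition n P" and Y: "Y \<subseteq> {1..n}" and YP: "Y = \<Union>{\<sigma> \<in> P. \<sigma> \<subseteq> Y}"
    and R: "R \<in> coarser_NC (restr P Y)" and t: "\<tau> \<in> lift Y R"
  shows "\<exists>S\<subseteq>P. \<tau> = \<Union>S"
proof -
  have fY: "finite Y" using Y finite_subset by blast
  have rP0: "restr P (\<Union>{\<sigma> \<in> P. \<sigma> \<subseteq> Y}) = (\<lambda>B. rank (\<Union>{\<sigma> \<in> P. \<sigma> \<subseteq> Y}) ` B) ` {\<sigma> \<in> P. \<sigma> \<subseteq> Y}"
    by (rule restr_blocks[OF P]) blast
  have rP: "restr P Y = (\<lambda>B. rank Y ` B) ` {\<sigma> \<in> P. \<sigma> \<subseteq> Y}"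
    using rP0 by (simp only: YP[symmetric])
  obtain B where B: "B \<in> R" "\<tau> = {y \<in> Y. rank Y y \<in> B}" using t unfolding lift_def by blast
  have Bu: "B = \<Union>{B0 \<in> restr P Y. B0 \<subseteq> B}"
    using coarser_props(3)[OF restr_partition[OF P Y] R B(1)] .
  let ?S = "{\<sigma> \<in> P. \<sigma> \<subseteq> Y \<and> rank Y ` \<sigma> \<subseteq> B}"
  have "\<tau> = \<Union>?S"
  proof
    show "\<tau> \<subseteq> \<Union>?S"
    proof
      fix y assume yt: "y \<in> \<tau>"
      have y0: "y \<in> {y \<in> Y. rank Y y \<in> B}" using B(2) yt by (rule subst)
      have y: "y \<in> Y" "rank Y y \<in> B" using y0 by simp_all
      have Bu': "\<Union>{B0 \<in> restr P Y. B0 \<subseteq> B} = B" using Bu by (rule sym)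
      have "rank Y y \<in> \<Union>{B0 \<in> restr P Y. B0 \<subseteq> B}" using y(2) by (simp only: Bu')
      then obtain B0 where B00: "B0 \<in> {B0 \<in> restr P Y. B0 \<subseteq> B}" "rank Y y \<in> B0" by (rule UnionE)
      then have B0: "B0 \<in> restr P Y" "B0 \<subseteq> B" "rank Y y \<in> B0" by simp_all
      have "B0 \<in> (\<lambda>B. rank Y ` B) ` {\<sigma> \<in> P. \<sigma> \<subseteq> Y}" using B0(1) rP by simp
      then obtain \<sigma> where s0: "\<sigma> \<in> {\<sigma> \<in> P. \<sigma> \<subseteq> Y}" "B0 = rank Y ` \<sigma>" by (rule imageE)
      then have s: "\<sigma> \<in> P" "\<sigma> \<subseteq> Y" "B0 = rank Y ` \<sigma>" by simp_all
      have "rank Y y \<in> rank Y ` \<sigma>" using B0(3) s(3) by simp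
      then obtain y' where y': "y' \<in> \<sigma>" "rank Y y = rank Y y'" by (rule imageE)
      have "y' \<in> Y" using y' s by blast
      then have "y = y'" using inj_onD[OF rank_inj[OF fY] y'(2) y(1)] by simp
      then have yy: "y \<in> \<sigma>" using y' by simp
      have "\<sigma> \<in> ?S" using s B0 by simp
      then show "y \<in> \<Union>?S" using yy by (rule UnionI)
    qed
    show "\<Union>?S \<subseteq> \<tau>"
    proof
      fix y assume "y \<in> \<Union>?S"
      then obtain \<sigma> where "\<sigma> \<in> ?S" "y \<in> \<sigma>" by (rule UnionE)
      then have "y \<in> Y" "rank Y y \<in> B" by auto
      then show "y \<in> \<tau>" using B(2) by simp
    qed
  qed
  moreover have "?S \<subseteq> P" by blast
  ultimately show ?thesis by (intro exI[of _ ?S]) simp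
qed

lemma quot_split:
  assumes P: "is_partition n P" and Q: "Q \<in> coarser_NC P" and Y: "Y \<subseteq> {1..n}"
    and YQ: "Y = \<Union>{\<tau> \<in> Q. \<tau> \<subseteq> Y}"
  shows "quot (restr P Y) (restr Q Y) = (\<Sum>\<tau>\<in>{\<tau> \<in> Q. \<tau> \<subseteq> Y}. {#restr P \<tau>#})"
proof -
  note cq = coarser_props[OF P Q]
  have fY: "finite Y" using Y finite_subset by blast
  let ?S = "{\<tau> \<in> Q. \<tau> \<subseteq> Y}"
  have fS: "finite ?S" using part_props(1)[OF cq(1)] by simp
  have rQ0: "restr Q (\<Union>?S) = (\<lambda>B. rank (\<Union>?S) ` B) ` ?S"
    by (rule restr_blocks[OF cq(1)]) blast
  have rQ: "restr Q Y = (\<lambda>B. rank Y ` B) ` ?S"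
    using rQ0 by (simp only: YQ[symmetric])
  have inj: "inj_on (\<lambda>B. rank Y ` B) ?S"
  proof (rule inj_onI)
    fix B1 B2 assume "B1 \<in> ?S" "B2 \<in> ?S" "rank Y ` B1 = rank Y ` B2"
    then show "B1 = B2" using inj_on_image_eq_iff[OF rank_inj[OF fY]] by blast
  qed
  have "quot (restr P Y) (restr Q Y) = image_mset (restr (restr P Y)) (image_mset (\<lambda>B. rank Y ` B) (mset_set ?S))"
    unfolding quot_def rQ image_mset_mset_set[OF inj] ..
  also have "\<dots> = image_mset (\<lambda>\<tau>. restr (restr P Y) (rank Y ` \<tau>)) (mset_set ?S)"
    by (simp add: multiset.map_comp comp_def)
  also have "\<dots> = image_mset (restr P) (mset_set ?S)"
    by (intro image_mset_cong) (use fS in \<open>auto intro!: restr_restr[OF fY]\<close>)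
  also have "\<dots> = (\<Sum>\<tau>\<in>?S. {#restr P \<tau>#})"
    using fS by (induction rule: finite_induct) auto
  finally show ?thesis .
qed

lemma quot_sum: "finite Q \<Longrightarrow> quot P Q = (\<Sum>\<tau>\<in>Q. {#restr P \<tau>#})"
  unfolding quot_def by (induction rule: finite_induct) auto

lemma A_facts:
  assumes P: "is_partition n P" and Q: "Q \<in> coarser_NC P" and L: "lowerset Q L"
  defines "X \<equiv> \<Union>L"
  shows "is_partition n Q" "\<And>i. gap Q X i = gap P X i" "finite X" "X \<subseteq> {1..n}"
    "L = {\<tau> \<in> Q. \<tau> \<subseteq> X}"
    "\<And>\<tau>. \<tau> \<in> Q \<Longrightarrow> \<tau> \<notin> L \<Longrightarrow> \<exists>i\<le>card X. \<tau> \<subseteq> gap P X i"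
    "\<And>i. i \<le> card X \<Longrightarrow> gap P X i = \<Union>{\<tau> \<in> Q. \<tau> \<subseteq> gap P X i}"
    "Q = L \<union> (\<Union>i\<in>{..card X}. {\<tau> \<in> Q. \<tau> \<subseteq> gap P X i})"
    "lowerset P {\<pi> \<in> P. \<pi> \<subseteq> X}" "\<Union>{\<pi> \<in> P. \<pi> \<subseteq> X} = X"
    "restr Q X = (\<lambda>B. rank X ` B) ` L"
    "X = \<Union>{\<tau> \<in> Q. \<tau> \<subseteq> X}"
    "\<And>\<tau>. \<tau> \<in> L \<Longrightarrow> \<tau> \<subseteq> X"
proof -
  note cq = coarser_props[OF P Q]
  show Qp: "is_partition n Q" by (rule cq(1))
  show ge: "gap Q X i = gap P X i" for i
    by (rule gap_deg) (simp add: part_deg[OF Qp] part_deg[OF P])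
  note sl = split_lowerset[OF Qp L, folded X_def]
  show fX: "finite X" and Xs: "X \<subseteq> {1..n}" by (rule sl(1), rule sl(2))
  show LX: "L = {\<tau> \<in> Q. \<tau> \<subseteq> X}" by (rule sl(4))
  show "\<exists>i\<le>card X. \<tau> \<subseteq> gap P X i" if "\<tau> \<in> Q" "\<tau> \<notin> L" for \<tau>
    using sl(3)[OF that] ge by simp
  show "gap P X i = \<Union>{\<tau> \<in> Q. \<tau> \<subseteq> gap P X i}" if "i \<le> card X" for i
    using split_gap_union[OF Qp L that[unfolded X_def]] ge X_def by simp
  show "Q = L \<union> (\<Union>i\<in>{..card X}. {\<tau> \<in> Q. \<tau> \<subseteq> gap P X i})"
    using split_union[OF Qp L] ge X_def by simp
  show tX: "\<tau> \<subseteq> X" if "\<tau> \<in> L" for \<tau> using that X_def by blast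
  show UL: "\<Union>{\<pi> \<in> P. \<pi> \<subseteq> X} = X"
  proof
    show "\<Union>{\<pi> \<in> P. \<pi> \<subseteq> X} \<subseteq> X" by blast
    show "X \<subseteq> \<Union>{\<pi> \<in> P. \<pi> \<subseteq> X}"
    proof
      fix x assume "x \<in> X"
      then obtain \<tau> where t: "\<tau> \<in> L" "x \<in> \<tau>" using X_def by blast
      then have tQ: "\<tau> \<in> Q" using L by (auto simp: lowerset_def)
      have "\<tau> = \<Union>{\<sigma> \<in> P. \<sigma> \<subseteq> \<tau>}" by (rule cq(3)[OF tQ])
      then have "x \<in> \<Union>{\<sigma> \<in> P. \<sigma> \<subseteq> \<tau>}" using t(2) by simp
      then obtain \<sigma> where "\<sigma> \<in> P" "\<sigma> \<subseteq> \<tau>" "x \<in> \<sigma>" by blast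
      moreover have "\<tau> \<subseteq> X" by (rule tX[OF t(1)])
      ultimately show "x \<in> \<Union>{\<pi> \<in> P. \<pi> \<subseteq> X}" by blast
    qed
  qed
  show "lowerset P {\<pi> \<in> P. \<pi> \<subseteq> X}"
    unfolding lowerset_rank_iff[OF P] UL
  proof (intro conjI ballI impI)
    show "{\<pi> \<in> P. \<pi> \<subseteq> X} \<subseteq> P" by blast
    fix \<sigma> assume s: "\<sigma> \<in> P" "\<sigma> \<notin> {\<pi> \<in> P. \<pi> \<subseteq> X}"
    obtain \<tau> where t: "\<tau> \<in> Q" "\<sigma> \<subseteq> \<tau>" using cq(4)[OF s(1)] by blast
    have "\<tau> \<notin> L"
    proof
      assume "\<tau> \<in> L" then have "\<tau> \<subseteq> X" by (rule tX)
      then show False using s t by blast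
    qed
    then obtain i where i: "i \<le> card X" "\<tau> \<subseteq> gap Q X i" using sl(3)[OF t(1)] by blast
    have "\<forall>y\<in>\<sigma>. rank X y = i"
    proof
      fix y assume "y \<in> \<sigma>"
      then have "y \<in> gap Q X i" using t i by blast
      then show "rank X y = i"
        using gap_facts(4)[OF fX Xs part_deg[OF Qp] i(1)] by blast
    qed
    then show "\<exists>i. \<forall>y\<in>\<sigma>. rank X y = i" by blast
  qed
  have LQ: "L \<subseteq> Q" using L by (simp add: lowerset_def)
  show "restr Q X = (\<lambda>B. rank X ` B) ` L"
    unfolding X_def by (rule restr_blocks[OF Qp LQ])
  show "X = \<Union>{\<tau> \<in> Q. \<tau> \<subseteq> X}"
  proof
    show "X \<subseteq> \<Union>{\<tau> \<in> Q. \<tau> \<subseteq> X}" using LQ tX X_def by blast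
  qed blast
qed

lemma listset_single: "qs \<in> listset [A] \<longleftrightarrow> (\<exists>Q\<in>A. qs = [Q])"
  by (auto simp: set_Cons_def)

lemma listset_map_upt:
  "qs \<in> listset (map f [0..<m]) \<longleftrightarrow> length qs = m \<and> (\<forall>i<m. qs ! i \<in> f i)"
  by (simp add: listset_iff)

lemma B_facts:
  assumes P: "is_partition n P" and ncP: "noncrossing P" and L: "lowerset P L"
    and Q': "Q' \<in> coarser_NC (restr P (\<Union>L))"
    and qsi: "\<And>i. i \<le> card (\<Union>L) \<Longrightarrow> qs ! i \<in> coarser_NC (restr P (gap P (\<Union>L) i))"
  defines "X \<equiv> \<Union>L"
  defines "Q \<equiv> lift X Q' \<union> (\<Union>i\<in>{..card X}. lift (gap P X i) (qs ! i))"
  shows "Q \<in> coarser_NC P" "lowerset Q (lift X Q')" "\<Union>(lift X Q') = X"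
    "{\<tau> \<in> Q. \<tau> \<subseteq> X} = lift X Q'"
    "\<And>i. i \<le> card X \<Longrightarrow> {\<tau> \<in> Q. \<tau> \<subseteq> gap P X i} = lift (gap P X i) (qs ! i)"
proof -
  note sl = split_lowerset[OF P L, folded X_def]
  have fX: "finite X" and Xs: "X \<subseteq> {1..n}" and LX: "L = {\<tau> \<in> P. \<tau> \<subseteq> X}" using sl by auto
  have dP: "deg P = n" by (rule part_deg[OF P])
  note gf = gap_facts[OF fX Xs dP]
  let ?G = "gap P X"
  have Gs: "?G i \<subseteq> {1..n} - X" if "i \<le> card X" for i using gf(1)[OF that] .
  have fG: "finite (?G i)" for i unfolding gap_def by simp
  have GG: "?G i \<inter> ?G j = {}" if "i \<le> card X" "j \<le> card X" "i \<noteq> j" for i j using gf(2)[OF that] .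
  have RX: "is_partition (card X) (restr P X)" by (rule restr_partition[OF P Xs])
  have RG: "is_partition (card (?G i)) (restr P (?G i))" if "i \<le> card X" for i
    using restr_partition[OF P] Gs[OF that] by blast
  have Q'X: "Q' \<in> coarser_NC (restr P X)" using Q' X_def by simp
  note cQ' = coarser_props[OF RX Q'X]
  have qsG: "qs ! i \<in> coarser_NC (restr P (?G i))" if "i \<le> card X" for i using qsi that X_def by simp
  have cqs1: "is_partition (card (?G i)) (qs ! i)" if "i \<le> card X" for i
    using coarser_props(1)[OF RG[OF that] qsG[OF that]] .
  have cqs2: "noncrossing (qs ! i)" if "i \<le> card X" for i
    using coarser_props(2)[OF RG[OF that] qsG[OF that]] .
  note lpX = lift_partition[OF fX cQ'(1)]
  have lpG1: "\<tau> \<noteq> {}" if "i \<le> card X" "\<tau> \<in> lift (?G i) (qs ! i)" for i \<tau>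
    using lift_partition(1)[OF fG cqs1[OF that(1)] that(2)] .
  have lpG2: "\<tau>1 \<inter> \<tau>2 = {}" if "i \<le> card X" "\<tau>1 \<in> lift (?G i) (qs ! i)" "\<tau>2 \<in> lift (?G i) (qs ! i)" "\<tau>1 \<noteq> \<tau>2" for i \<tau>1 \<tau>2
    using lift_partition(2)[OF fG cqs1[OF that(1)] that(2,3,4)] .
  have lpG3: "\<Union>(lift (?G i) (qs ! i)) = ?G i" if "i \<le> card X" for i
    using lift_partition(3)[OF fG cqs1[OF that]] .
  have blk: "(\<tau> \<in> lift X Q' \<and> \<tau> \<subseteq> X) \<or> (\<exists>i\<le>card X. \<tau> \<in> lift (?G i) (qs ! i) \<and> \<tau> \<subseteq> ?G i)" if "\<tau> \<in> Q" for \<tau>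
    using that unfolding Q_def by (auto dest: lift_sub)
  have Qp: "is_partition n Q"
    unfolding is_partition_def
  proof (intro conjI ballI impI)
    fix \<tau> assume "\<tau> \<in> Q"
    then show "\<tau> \<noteq> {}" using blk lpX(1) lpG1 by blast
  next
    fix \<tau>1 \<tau>2 assume t1: "\<tau>1 \<in> Q" and t2: "\<tau>2 \<in> Q" and ne: "\<tau>1 \<noteq> \<tau>2"
    show "\<tau>1 \<inter> \<tau>2 = {}"
    proof (cases "\<tau>1 \<in> lift X Q'")
      case c1: True
      show ?thesis
      proof (cases "\<tau>2 \<in> lift X Q'")
        case True then show ?thesis using lpX(2) c1 ne by blast
      next
        case False
        then obtain j where j: "j \<le> card X" "\<tau>2 \<subseteq> ?G j" using blk[OF t2] by blast
        have "\<tau>1 \<subseteq> X" using c1 by (rule lift_sub)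
        then show ?thesis using j Gs[OF j(1)] by blast
      qed
    next
      case c1: False
      then obtain i where i: "i \<le> card X" "\<tau>1 \<in> lift (?G i) (qs ! i)" "\<tau>1 \<subseteq> ?G i" using blk[OF t1] by blast
      show ?thesis
      proof (cases "\<tau>2 \<in> lift X Q'")
        case True
        then have "\<tau>2 \<subseteq> X" by (rule lift_sub)
        then show ?thesis using i Gs[OF i(1)] by blast
      next
        case False
        then obtain j where j: "j \<le> card X" "\<tau>2 \<in> lift (?G j) (qs ! j)" "\<tau>2 \<subseteq> ?G j" using blk[OF t2] by blast
        show ?thesis
        proof (cases "i = j")
          case True then show ?thesis using lpG2[OF i(1) i(2)] j(2) ne by blast
        next
          case False then show ?thesis using GG[OF i(1) j(1) False] i(3) j(3) by blast
        qed
      qed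
    qed
  next
    have "\<Union>Q = \<Union>(lift X Q') \<union> (\<Union>i\<in>{..card X}. \<Union>(lift (?G i) (qs ! i)))"
      unfolding Q_def by blast
    also have "\<dots> = X \<union> (\<Union>i\<in>{..card X}. ?G i)"
      using lpX(3) lpG3 by simp
    also have "\<dots> = {1..n}"
    proof
      show "X \<union> (\<Union>i\<in>{..card X}. ?G i) \<subseteq> {1..n}" using Xs Gs by blast
      show "{1..n} \<subseteq> X \<union> (\<Union>i\<in>{..card X}. ?G i)"
      proof
        fix y assume y: "y \<in> {1..n}"
        show "y \<in> X \<union> (\<Union>i\<in>{..card X}. ?G i)"
        proof (cases "y \<in> X")
          case False
          then have "y \<in> ?G (rank X y)" using gf(3)[OF y] by blast
          moreover have "rank X y \<le> card X" by (rule rank_le_card[OF fX])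
          ultimately show ?thesis by blast
        qed simp
      qed
    qed
    finally show "\<Union>Q = {1..n}" .
  qed
  have ncQ: "noncrossing Q"
  proof (rule noncrossingI)
    fix \<tau>1 \<tau>2 a b c d
    assume t1: "\<tau>1 \<in> Q" and t2: "\<tau>2 \<in> Q" and ne: "\<tau>1 \<noteq> \<tau>2" and o: "a < c" "c < b" "b < d"
      and m: "a \<in> \<tau>1" "b \<in> \<tau>1" "c \<in> \<tau>2" "d \<in> \<tau>2"
    show False
    proof (cases "\<tau>1 \<in> lift X Q'")
      case c1: True
      show False
      proof (cases "\<tau>2 \<in> lift X Q'")
        case True
        show False by (rule noncrossingD[OF lift_noncrossing[OF fX cQ'(2)] c1 True ne o m])
      next
        case False
        then obtain j where j: "j \<le> card X" "\<tau>2 \<subseteq> ?G j" using blk[OF t2] by blast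
        have "b \<in> ?G j" using between_gap[OF fX j(1), of c P d b] j m o by auto
        moreover have "b \<in> X" using lift_sub[OF c1] m by blast
        ultimately show False using Gs[OF j(1)] by blast
      qed
    next
      case c1: False
      then obtain i where i: "i \<le> card X" "\<tau>1 \<in> lift (?G i) (qs ! i)" "\<tau>1 \<subseteq> ?G i" using blk[OF t1] by blast
      have cG: "c \<in> ?G i" using between_gap[OF fX i(1), of a P b c] i m o by auto
      show False
      proof (cases "\<tau>2 \<in> lift X Q'")
        case True
        then have "c \<in> X" using lift_sub m by blast
        then show False using cG Gs[OF i(1)] by blast
      next
        case False
        then obtain j where j: "j \<le> card X" "\<tau>2 \<in> lift (?G j) (qs ! j)" "\<tau>2 \<subseteq> ?G j" using blk[OF t2] by blast
        show False
        proof (cases "i = j")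
          case True
          show False by (rule noncrossingD[OF lift_noncrossing[OF fG cqs2[OF i(1)]] i(2) _ ne o m])
            (use j True in simp)
        next
          case False then show False using GG[OF i(1) j(1) False] cG j(3) m by blast
        qed
      qed
    qed
  qed
  have XP: "X = \<Union>{\<sigma> \<in> P. \<sigma> \<subseteq> X}" using LX X_def by blast
  have refQ: "refines P Q"
    unfolding refines_def
  proof
    fix \<tau> assume t: "\<tau> \<in> Q"
    show "\<exists>S\<subseteq>P. \<tau> = \<Union>S"
    proof (cases "\<tau> \<in> lift X Q'")
      case True
      show ?thesis by (rule lift_refines[OF P Xs XP Q'X True])
    next
      case False
      then obtain i where i: "i \<le> card X" "\<tau> \<in> lift (?G i) (qs ! i)" using blk[OF t] by blast
      have GP: "?G i = \<Union>{\<sigma> \<in> P. \<sigma> \<subseteq> ?G i}"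
        using split_gap_union[OF P L] i(1) X_def by simp
      have "?G i \<subseteq> {1..n}" using Gs[OF i(1)] by blast
      then show ?thesis by (rule lift_refines[OF P _ GP qsG[OF i(1)] i(2)])
    qed
  qed
  show "Q \<in> coarser_NC P" unfolding coarser_NC_def using Qp ncQ refQ dP by simp
  show UX: "\<Union>(lift X Q') = X" by (rule lpX(3))
  have LQ: "lift X Q' \<subseteq> Q" unfolding Q_def by blast
  show "lowerset Q (lift X Q')"
    unfolding lowerset_rank_iff[OF Qp] UX
  proof (intro conjI ballI impI LQ)
    fix \<sigma> assume s: "\<sigma> \<in> Q" "\<sigma> \<notin> lift X Q'"
    then obtain i where i: "i \<le> card X" "\<sigma> \<subseteq> ?G i" using blk by blast
    have "\<forall>y\<in>\<sigma>. rank X y = i" using gf(4)[OF i(1)] i(2) by blast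
    then show "\<exists>i. \<forall>y\<in>\<sigma>. rank X y = i" by blast
  qed
  show "{\<tau> \<in> Q. \<tau> \<subseteq> X} = lift X Q'"
  proof
    show "{\<tau> \<in> Q. \<tau> \<subseteq> X} \<subseteq> lift X Q'"
    proof
      fix \<tau> assume t: "\<tau> \<in> {\<tau> \<in> Q. \<tau> \<subseteq> X}"
      show "\<tau> \<in> lift X Q'"
      proof (rule ccontr)
        assume "\<tau> \<notin> lift X Q'"
        then obtain i where i: "i \<le> card X" "\<tau> \<in> lift (?G i) (qs ! i)" "\<tau> \<subseteq> ?G i" using blk t by blast
        then show False using lpG1[OF i(1,2)] Gs[OF i(1)] t by blast
      qed
    qed
    show "lift X Q' \<subseteq> {\<tau> \<in> Q. \<tau> \<subseteq> X}" using LQ lift_sub by blast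
  qed
  show "{\<tau> \<in> Q. \<tau> \<subseteq> ?G i} = lift (?G i) (qs ! i)" if i: "i \<le> card X" for i
  proof
    show "{\<tau> \<in> Q. \<tau> \<subseteq> ?G i} \<subseteq> lift (?G i) (qs ! i)"
    proof
      fix \<tau> assume t: "\<tau> \<in> {\<tau> \<in> Q. \<tau> \<subseteq> ?G i}"
      then have tQ: "\<tau> \<in> Q" and tG: "\<tau> \<subseteq> ?G i" by auto
      have tne: "\<tau> \<noteq> {}" using Qp tQ by (simp add: is_partition_def)
      show "\<tau> \<in> lift (?G i) (qs ! i)"
      proof (cases "\<tau> \<in> lift X Q'")
        case True
        then have "\<tau> \<subseteq> X" by (rule lift_sub)
        then show ?thesis using tG tne Gs[OF i] by blast
      next
        case False
        then obtain j where j: "j \<le> card X" "\<tau> \<in> lift (?G j) (qs ! j)" "\<tau> \<subseteq> ?G j" using blk[OF tQ] by blast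
        show ?thesis
        proof (cases "i = j")
          case True then show ?thesis using j by simp
        next
          case False then show ?thesis using GG[OF i j(1) False] tG j(3) tne by blast
        qed
      qed
    qed
    show "lift (?G i) (qs ! i) \<subseteq> {\<tau> \<in> Q. \<tau> \<subseteq> ?G i}"
      unfolding Q_def using i lift_sub by blast
  qed
qed

definition gmap :: "part \<Rightarrow> part \<times> part \<Rightarrow> part \<times> part list \<times> part list" where
  "gmap P = (\<lambda>(Q, L'). ({\<pi> \<in> P. \<pi> \<subseteq> \<Union>L'}, [restr Q (\<Union>L')],
      map (\<lambda>i. restr Q (gap P (\<Union>L') i)) [0..<card (\<Union>L') + 1]))"

definition hmap :: "part \<Rightarrow> part \<times> part list \<times> part list \<Rightarrow> part \<times> part" where
  "hmap P = (\<lambda>(L, qs1, qs2). (lift (\<Union>L) (hd qs1) \<union> (\<Union>i\<in>{..card (\<Union>L)}. lift (gap P (\<Union>L) i) (qs2 ! i)),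
      lift (\<Union>L) (hd qs1)))"

definition Aset :: "part \<Rightarrow> (part \<times> part) set" where
  "Aset P = Sigma (coarser_NC P) (\<lambda>Q. {L'. lowerset Q L'})"

definition Bset :: "part \<Rightarrow> (part \<times> part list \<times> part list) set" where
  "Bset P = Sigma {L. lowerset P L} (\<lambda>L. listset [coarser_NC (restr P (\<Union>L))] \<times>
      listset (map (\<lambda>i. coarser_NC (restr P (gap P (\<Union>L) i))) [0..<card (\<Union>L) + 1]))"

lemma restr_blocks_eq:
  assumes "is_partition n Q" "S \<subseteq> Q" "Y = \<Union>S"
  shows "restr Q Y = (\<lambda>B. rank Y ` B) ` S"
proof -
  have "restr Q (\<Union>S) = (\<lambda>B. rank (\<Union>S) ` B) ` S" by (rule restr_blocks[OF assms(1,2)])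
  then show ?thesis using assms(3) by simp
qed

lemma gap_sub: "gap P X i \<subseteq> {1..deg P}"
  by (auto simp: gap_def)

lemma A_restr_gap:
  assumes P: "is_partition n P" and Q: "Q \<in> coarser_NC P" and L: "lowerset Q L" and i: "i \<le> card (\<Union>L)"
  shows "restr Q (gap P (\<Union>L) i) = (\<lambda>B. rank (gap P (\<Union>L) i) ` B) ` {\<tau> \<in> Q. \<tau> \<subseteq> gap P (\<Union>L) i}"
  by (rule restr_blocks_eq[OF A_facts(1)[OF P Q L]]) (use A_facts(7)[OF P Q L i] in auto)

lemma g_into:
  assumes P: "is_partition n P" and a: "a \<in> Aset P"
  shows "gmap P a \<in> Bset P"
proof -
  obtain Q L where aQL: "a = (Q, L)" and Q: "Q \<in> coarser_NC P" and L: "lowerset Q L"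
    using a by (auto simp: Aset_def)
  note af = A_facts[OF P Q L]
  let ?X = "\<Union>L"
  have Ug: "\<Union>{\<pi> \<in> P. \<pi> \<subseteq> ?X} = ?X" by (rule af(10))
  have 1: "[restr Q ?X] \<in> listset [coarser_NC (restr P ?X)]"
    using restr_coarser[OF P Q af(4) af(12)] by (simp add: listset_single)
  have 2: "map (\<lambda>i. restr Q (gap P ?X i)) [0..<card ?X + 1] \<in> listset (map (\<lambda>i. coarser_NC (restr P (gap P ?X i))) [0..<card ?X + 1])"
    unfolding listset_map_upt
  proof (intro conjI allI impI)
    fix i assume "i < card ?X + 1"
    then have i: "i \<le> card ?X" by simp
    have "gap P ?X i \<subseteq> {1..n}" using gap_sub[of P ?X i] part_deg[OF P] by simp
    then show "map (\<lambda>i. restr Q (gap P ?X i)) [0..<card ?X + 1] ! i \<in> coarser_NC (restr P (gap P ?X i))"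
      using restr_coarser[OF P Q _ af(7)[OF i]] i by (simp del: upt_Suc)
  qed simp
  show ?thesis
    unfolding aQL gmap_def Bset_def using af(9) 1 2 Ug by simp
qed

lemma h_into:
  assumes P: "is_partition n P" and ncP: "noncrossing P" and b: "b \<in> Bset P"
  shows "hmap P b \<in> Aset P"
proof -
  obtain L qs1 qs2 where bL: "b = (L, qs1, qs2)" and L: "lowerset P L"
    and q1: "qs1 \<in> listset [coarser_NC (restr P (\<Union>L))]"
    and q2: "qs2 \<in> listset (map (\<lambda>i. coarser_NC (restr P (gap P (\<Union>L) i))) [0..<card (\<Union>L) + 1])"
    using b by (auto simp: Bset_def)
  obtain Q' where Q': "Q' \<in> coarser_NC (restr P (\<Union>L))" "qs1 = [Q']" using q1 by (auto simp: listset_single)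
  have qsi: "qs2 ! i \<in> coarser_NC (restr P (gap P (\<Union>L) i))" if "i \<le> card (\<Union>L)" for i
    using q2 that unfolding listset_map_upt by (simp add: less_Suc_eq_le)
  note bf = B_facts[OF P ncP L Q'(1) qsi]
  show ?thesis unfolding bL hmap_def Aset_def using bf(1,2) Q'(2) by simp
qed

lemma hg:
  assumes P: "is_partition n P" and a: "a \<in> Aset P"
  shows "hmap P (gmap P a) = a"
proof -
  obtain Q L where aQL: "a = (Q, L)" and Q: "Q \<in> coarser_NC P" and L: "lowerset Q L"
    using a by (auto simp: Aset_def)
  note af = A_facts[OF P Q L]
  let ?X = "\<Union>L"
  have fX: "finite ?X" by (rule af(3))
  have Ug: "\<Union>{\<pi> \<in> P. \<pi> \<subseteq> ?X} = ?X" by (rule af(10))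
  have 1: "lift ?X (restr Q ?X) = L"
    unfolding af(11) by (rule lift_restr[OF fX af(13)])
  have 2: "lift (gap P ?X i) (restr Q (gap P ?X i)) = {\<tau> \<in> Q. \<tau> \<subseteq> gap P ?X i}" if i: "i \<le> card ?X" for i
    unfolding A_restr_gap[OF P Q L i] by (rule lift_restr) (auto simp: gap_def)
  have 3: "(\<Union>i\<in>{..card ?X}. lift (gap P ?X i) (map (\<lambda>i. restr Q (gap P ?X i)) [0..<card ?X + 1] ! i))
      = (\<Union>i\<in>{..card ?X}. {\<tau> \<in> Q. \<tau> \<subseteq> gap P ?X i})"
  proof (rule SUP_cong[OF refl])
    fix i assume "i \<in> {..card ?X}"
    then have i: "i \<le> card ?X" by simp
    then have "map (\<lambda>i. restr Q (gap P ?X i)) [0..<card ?X + 1] ! i = restr Q (gap P ?X i)"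
      by (simp del: upt_Suc add: less_Suc_eq_le)
    then show "lift (gap P ?X i) (map (\<lambda>i. restr Q (gap P ?X i)) [0..<card ?X + 1] ! i) = {\<tau> \<in> Q. \<tau> \<subseteq> gap P ?X i}"
      using 2[OF i] by simp
  qed
  show ?thesis
    unfolding aQL gmap_def hmap_def using Ug 1 3 af(8)[symmetric] by simp
qed

lemma gh:
  assumes P: "is_partition n P" and ncP: "noncrossing P" and b: "b \<in> Bset P"
  shows "gmap P (hmap P b) = b"
proof -
  obtain L qs1 qs2 where bL: "b = (L, qs1, qs2)" and L: "lowerset P L"
    and q1: "qs1 \<in> listset [coarser_NC (restr P (\<Union>L))]"
    and q2: "qs2 \<in> listset (map (\<lambda>i. coarser_NC (restr P (gap P (\<Union>L) i))) [0..<card (\<Union>L) + 1])"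
    using b by (auto simp: Bset_def)
  obtain Q' where Q': "Q' \<in> coarser_NC (restr P (\<Union>L))" "qs1 = [Q']" using q1 by (auto simp: listset_single)
  have len: "length qs2 = card (\<Union>L) + 1" using q2 unfolding listset_map_upt by simp
  have qsi: "qs2 ! i \<in> coarser_NC (restr P (gap P (\<Union>L) i))" if "i \<le> card (\<Union>L)" for i
    using q2 that unfolding listset_map_upt by (simp add: less_Suc_eq_le)
  let ?X = "\<Union>L"
  let ?G = "gap P ?X"
  define Q where "Q = lift ?X Q' \<union> (\<Union>i\<in>{..card ?X}. lift (?G i) (qs2 ! i))"
  note bf = B_facts[OF P ncP L Q'(1) qsi, folded Q_def]
  note sl = split_lowerset[OF P L]
  have fX: "finite ?X" by (rule sl(1))
  have Xs: "?X \<subseteq> {1..n}" by (rule sl(2))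
  have Qp: "is_partition n Q" by (rule coarser_props(1)[OF P bf(1)])
  have RX: "is_partition (card ?X) (restr P ?X)" by (rule restr_partition[OF P Xs])
  have Q'p: "is_partition (card ?X) Q'" by (rule coarser_props(1)[OF RX Q'(1)])
  have h: "hmap P b = (Q, lift ?X Q')" unfolding bL hmap_def Q_def using Q'(2) by simp
  have UX: "\<Union>(lift ?X Q') = ?X" by (rule bf(3))
  have e1: "{\<pi> \<in> P. \<pi> \<subseteq> ?X} = L" using sl(4) by simp
  have e2: "restr Q ?X = Q'"
  proof -
    have "restr Q ?X = (\<lambda>B. rank ?X ` B) ` lift ?X Q'"
      by (rule restr_blocks_eq[OF Qp]) (use bf(4) UX in auto)
    also have "\<dots> = Q'" by (rule img_lift_all[OF fX]) (use Q'p in \<open>simp add: is_partition_def\<close>)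
    finally show ?thesis .
  qed
  have e3: "map (\<lambda>i. restr Q (?G i)) [0..<card ?X + 1] = qs2"
  proof (rule nth_equalityI)
    show "length (map (\<lambda>i. restr Q (?G i)) [0..<card ?X + 1]) = length qs2" using len by simp
    fix i assume "i < length (map (\<lambda>i. restr Q (?G i)) [0..<card ?X + 1])"
    then have i: "i \<le> card ?X" by simp
    have fG: "finite (?G i)" by (simp add: gap_def)
    have Gs: "?G i \<subseteq> {1..n}" using gap_sub[of P ?X i] part_deg[OF P] by simp
    have RG: "is_partition (card (?G i)) (restr P (?G i))" by (rule restr_partition[OF P Gs])
    have qp: "is_partition (card (?G i)) (qs2 ! i)" by (rule coarser_props(1)[OF RG qsi[OF i]])
    have UG: "\<Union>(lift (?G i) (qs2 ! i)) = ?G i" by (rule lift_partition(3)[OF fG qp])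
    have "restr Q (?G i) = (\<lambda>B. rank (?G i) ` B) ` lift (?G i) (qs2 ! i)"
      by (rule restr_blocks_eq[OF Qp]) (use bf(5)[of i] i UG in auto)
    also have "\<dots> = qs2 ! i" by (rule img_lift_all[OF fG]) (use qp in \<open>simp add: is_partition_def\<close>)
    finally show "map (\<lambda>i. restr Q (?G i)) [0..<card ?X + 1] ! i = qs2 ! i"
      using i by (simp del: upt_Suc add: less_Suc_eq_le)
  qed
  show ?thesis unfolding h gmap_def using UX e1 e2 e3 bL Q'(2) by simp
qed

lemma gmap_bij:
  assumes P: "is_partition n P" and ncP: "noncrossing P"
  shows "bij_betw (gmap P) (Aset P) (Bset P)"
  by (rule bij_betw_byWitness[where f'="hmap P"])
     (use hg[OF P] gh[OF P ncP] g_into[OF P] h_into[OF P ncP] in auto)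

lemma quot_decomp:
  assumes P: "is_partition n P" and Q: "Q \<in> coarser_NC P" and L: "lowerset Q L"
  shows "quot P Q = quot (restr P (\<Union>L)) (restr Q (\<Union>L))
     + (\<Sum>i\<in>{..card (\<Union>L)}. quot (restr P (gap P (\<Union>L) i)) (restr Q (gap P (\<Union>L) i)))"
proof -
  note af = A_facts[OF P Q L]
  let ?X = "\<Union>L"
  let ?S = "\<lambda>i. {\<tau> \<in> Q. \<tau> \<subseteq> gap P ?X i}"
  have Qp: "is_partition n Q" by (rule af(1))
  have fQ: "finite Q" by (rule part_props(1)[OF Qp])
  have ne: "\<And>\<tau>. \<tau> \<in> Q \<Longrightarrow> \<tau> \<noteq> {}" by (rule part_props(2)[OF Qp])
  have dP: "deg P = n" by (rule part_deg[OF P])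
  note gf = gap_facts[OF af(3) af(4) dP]
  have LQ: "L \<subseteq> Q" using L by (simp add: lowerset_def)
  have fL: "finite L" using fQ LQ finite_subset by blast
  have fS: "finite (?S i)" for i using fQ by simp
  have d1: "L \<inter> (\<Union>i\<in>{..card ?X}. ?S i) = {}"
  proof (rule ccontr)
    assume "L \<inter> (\<Union>i\<in>{..card ?X}. ?S i) \<noteq> {}"
    then obtain \<tau> i where t: "\<tau> \<in> L" "i \<le> card ?X" "\<tau> \<in> Q" "\<tau> \<subseteq> gap P ?X i" by blast
    then have "\<tau> \<subseteq> ?X" by (intro af(13))
    then show False using t gf(1)[OF t(2)] ne[OF t(3)] by blast
  qed
  have d2: "\<forall>i\<in>{..card ?X}. \<forall>j\<in>{..card ?X}. i \<noteq> j \<longrightarrow> ?S i \<inter> ?S j = {}"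
  proof (intro ballI impI)
    fix i j assume ij: "i \<in> {..card ?X}" "j \<in> {..card ?X}" "i \<noteq> j"
    show "?S i \<inter> ?S j = {}"
    proof (rule ccontr)
      assume "?S i \<inter> ?S j \<noteq> {}"
      then obtain \<tau> where t: "\<tau> \<in> Q" "\<tau> \<subseteq> gap P ?X i" "\<tau> \<subseteq> gap P ?X j" by blast
      then show False using gf(2)[of i j] ij ne[OF t(1)] by blast
    qed
  qed
  have "quot P Q = (\<Sum>\<tau>\<in>Q. {#restr P \<tau>#})" by (rule quot_sum[OF fQ])
  also have "\<dots> = (\<Sum>\<tau>\<in>L \<union> (\<Union>i\<in>{..card ?X}. ?S i). {#restr P \<tau>#})"
    using af(8) by simp
  also have "\<dots> = (\<Sum>\<tau>\<in>L. {#restr P \<tau>#}) + (\<Sum>\<tau>\<in>(\<Union>i\<in>{..card ?X}. ?S i). {#restr P \<tau>#})"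
    by (rule sum.union_disjoint[OF fL _ d1]) (simp add: fS)
  also have "(\<Sum>\<tau>\<in>(\<Union>i\<in>{..card ?X}. ?S i). {#restr P \<tau>#}) = (\<Sum>i\<in>{..card ?X}. \<Sum>\<tau>\<in>?S i. {#restr P \<tau>#})"
    by (rule sum.UNION_disjoint) (use fS d2 in auto)
  also have "(\<Sum>\<tau>\<in>L. {#restr P \<tau>#}) = quot (restr P ?X) (restr Q ?X)"
  proof -
    have "quot (restr P ?X) (restr Q ?X) = (\<Sum>\<tau>\<in>{\<tau> \<in> Q. \<tau> \<subseteq> ?X}. {#restr P \<tau>#})"
      by (rule quot_split[OF P Q af(4) af(12)])
    then show ?thesis using af(5) by simp
  qed
  also have "(\<Sum>i\<in>{..card ?X}. \<Sum>\<tau>\<in>?S i. {#restr P \<tau>#})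
      = (\<Sum>i\<in>{..card ?X}. quot (restr P (gap P ?X i)) (restr Q (gap P ?X i)))"
  proof (rule sum.cong[OF refl])
    fix i assume "i \<in> {..card ?X}"
    then have i: "i \<le> card ?X" by simp
    have Gs: "gap P ?X i \<subseteq> {1..n}" using gap_sub[of P ?X i] dP by simp
    show "(\<Sum>\<tau>\<in>?S i. {#restr P \<tau>#}) = quot (restr P (gap P ?X i)) (restr Q (gap P ?X i))"
      by (rule quot_split[OF P Q Gs af(7)[OF i], symmetric])
  qed
  finally show ?thesis .
qed

lemma finite_coarser: "finite (coarser_NC P)"
proof (rule finite_subset)
  show "coarser_NC P \<subseteq> Pow (Pow {1..deg P})"
    by (auto simp: coarser_NC_def is_partition_def)
qed simp

lemma finite_listset: "(\<And>A. A \<in> set As \<Longrightarrow> finite A) \<Longrightarrow> finite (listset As)"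
proof (induction As)
  case Nil
  then show ?case by simp
next
  case (Cons A As)
  have "listset (A # As) \<subseteq> (\<lambda>(a, b). a # b) ` (A \<times> listset As)"
    by (auto simp: set_Cons_def)
  moreover have "finite (A \<times> listset As)" using Cons by simp
  ultimately show ?case by (meson finite_imageI finite_subset)
qed

lemma finite_lowersets: "finite Q \<Longrightarrow> finite {L. lowerset Q L}"
  by (rule finite_subset[of _ "Pow Q"]) (auto simp: lowerset_def)

lemma msum_map:
  "sum_list (map2 quot (map f [0..<m]) (map g [0..<m])) = (\<Sum>i<m. quot (f i) (g i))"
proof -
  have "map2 quot (map f [0..<m]) (map g [0..<m]) = map (\<lambda>i. quot (f i) (g i)) [0..<m]"
    by (simp add: zip_map_map zip_same_conv_map)
  then show ?thesis by (simp add: sum_set_upt_conv_sum_list_nat[symmetric] atLeast0LessThan)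
qed

lemma comb_sum:
  fixes h :: "(part list \<times> part list) \<times> part multiset \<Rightarrow> 'a::comm_monoid_add"
  assumes P: "is_partition n P" and ncP: "noncrossing P"
  shows "(\<Sum>Q\<in>coarser_NC P. \<Sum>L\<in>{L. lowerset Q L}.
            h (([restr Q (\<Union>L)], map (\<lambda>i. restr Q (gap Q (\<Union>L) i)) [0..<card (\<Union>L) + 1]), quot P Q))
       = (\<Sum>L\<in>{L. lowerset P L}. \<Sum>qs1\<in>listset [coarser_NC (restr P (\<Union>L))].
            \<Sum>qs2\<in>listset (map (\<lambda>i. coarser_NC (restr P (gap P (\<Union>L) i))) [0..<card (\<Union>L) + 1]).
            h ((qs1, qs2), sum_list (map2 quot [restr P (\<Union>L)] qs1)
               + sum_list (map2 quot (map (\<lambda>i. restr P (gap P (\<Union>L) i)) [0..<card (\<Union>L) + 1]) qs2)))"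
  (is "?L = ?R")
proof -
  define Gt where "Gt = (\<lambda>(L, qs1, qs2). h ((qs1, qs2), sum_list (map2 quot [restr P (\<Union>L)] qs1)
               + sum_list (map2 quot (map (\<lambda>i. restr P (gap P (\<Union>L) i)) [0..<card (\<Union>L) + 1]) qs2)))"
  define Ft where "Ft = (\<lambda>(Q, L). h (([restr Q (\<Union>L)], map (\<lambda>i. restr Q (gap Q (\<Union>L) i)) [0..<card (\<Union>L) + 1]), quot P Q))"
  have fC: "finite (coarser_NC P)" by (rule finite_coarser)
  have "?L = sum Ft (Aset P)"
    unfolding Aset_def Ft_def
    by (rule sum.Sigma[OF fC]) (auto intro: finite_lowersets part_props(1)[OF coarser_props(1)[OF P]])
  also have "\<dots> = sum (\<lambda>a. Gt (gmap P a)) (Aset P)"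
  proof (rule sum.cong[OF refl])
    fix a assume a: "a \<in> Aset P"
    obtain Q L where aQL: "a = (Q, L)" and Q: "Q \<in> coarser_NC P" and L: "lowerset Q L"
      using a by (auto simp: Aset_def)
    note af = A_facts[OF P Q L]
    have Ug: "\<Union>{\<pi> \<in> P. \<pi> \<subseteq> \<Union>L} = \<Union>L" by (rule af(10))
    have ge: "(\<lambda>i. gap Q (\<Union>L) i) = (\<lambda>i. gap P (\<Union>L) i)" using af(2) by simp
    show "Ft a = Gt (gmap P a)"
      unfolding aQL Ft_def Gt_def gmap_def
      using quot_decomp[OF P Q L] Ug ge
      by (simp del: upt_Suc add: msum_map lessThan_Suc_atMost)
  qed
  also have "\<dots> = sum Gt (Bset P)"
    by (rule sum.reindex_bij_betw[OF gmap_bij[OF P ncP]])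
  also have "\<dots> = ?R"
  proof -
    have fin1: "finite {L. lowerset P L}" by (rule finite_lowersets[OF part_props(1)[OF P]])
    have fin2: "finite (listset [coarser_NC (restr P (\<Union>L))] \<times>
      listset (map (\<lambda>i. coarser_NC (restr P (gap P (\<Union>L) i))) [0..<card (\<Union>L) + 1]))" for L
      by (intro finite_cartesian_product finite_listset) (auto simp: finite_coarser)
    have "sum Gt (Bset P) = (\<Sum>L\<in>{L. lowerset P L}. \<Sum>q\<in>listset [coarser_NC (restr P (\<Union>L))] \<times>
      listset (map (\<lambda>i. coarser_NC (restr P (gap P (\<Union>L) i))) [0..<card (\<Union>L) + 1]). Gt (L, q))"
      unfolding Bset_def by (subst sum.Sigma[OF fin1]) (use fin2 in auto)
    also have "\<dots> = ?R"
      by (rule sum.cong[OF refl]) (simp add: sum.cartesian_product Gt_def split_beta)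
    finally show ?thesis .
  qed
  finally show ?thesis .
qed

lemma rho_word_expand:
  assumes "\<forall>R\<in>set ws. NC R"
  shows "rho_word ws = (\<Sum>qs\<in>listset (map coarser_NC ws). pm_basis (qs, sum_list (map2 quot ws qs)) :: _ \<Rightarrow>\<^sub>0 'k::comm_ring_1)"
  using assms
proof (induction ws)
  case Nil
  then show ?case by simp
next
  case (Cons R ws)
  have IH: "rho_word ws = (\<Sum>qs\<in>listset (map coarser_NC ws). pm_basis (qs, sum_list (map2 quot ws qs)) :: _ \<Rightarrow>\<^sub>0 'k)"
    using Cons by simp
  have R: "rho_gen R = (\<Sum>Q\<in>coarser_NC R. pm_basis ([Q], quot R Q) :: _ \<Rightarrow>\<^sub>0 'k)"
    using Cons.prems by (intro rho_gen_uniform) simp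
  have "rho_word (R # ws) = (pm_bil gbm (rho_gen R) (rho_word ws) :: _ \<Rightarrow>\<^sub>0 'k)"
    by (simp add: rho_word_Cons gb_mult_bil)
  also have "\<dots> = (\<Sum>Q\<in>coarser_NC R. \<Sum>qs\<in>listset (map coarser_NC ws).
       pm_basis (Q # qs, quot R Q + sum_list (map2 quot ws qs)))"
    unfolding R IH pm_bil_sum_left pm_bil_sum_right by simp (rule sum.swap)
  also have "\<dots> = (\<Sum>x\<in>coarser_NC R \<times> listset (map coarser_NC ws).
       pm_basis (fst x # snd x, quot R (fst x) + sum_list (map2 quot ws (snd x))))"
    by (simp add: sum.cartesian_product split_beta)
  also have "\<dots> = (\<Sum>qs\<in>(\<lambda>x. fst x # snd x) ` (coarser_NC R \<times> listset (map coarser_NC ws)).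
       pm_basis (qs, sum_list (map2 quot (R # ws) qs)))"
    by (subst sum.reindex) (auto simp: inj_on_def)
  also have "(\<lambda>x. fst x # snd x) ` (coarser_NC R \<times> listset (map coarser_NC ws)) = listset (map coarser_NC (R # ws))"
    by (auto simp: set_Cons_def image_iff)
  finally show ?case .
qed

lemma core: "NC P \<Longrightarrow> LM (rho_gen P) = RR (Delta0_gen P)"
proof -
  assume NCP: "NC P"
  then obtain n where P: "is_partition n P" and ncP: "noncrossing P" by (auto simp: NC_def)
  have UP: "\<Union>P = {1..deg P}" using P part_deg[OF P] by (simp add: is_partition_def)
  have u: "\<And>b. ggm b ([], []) = b" by (case_tac b) simp
  have LHS: "LM (rho_gen P) = (\<Sum>Q\<in>coarser_NC P. \<Sum>L\<in>{L. lowerset Q L}.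
            pm_basis (([restr Q (\<Union>L)], map (\<lambda>i. restr Q (gap Q (\<Union>L) i)) [0..<card (\<Union>L) + 1]), quot P Q))"
    unfolding rho_gen_uniform[OF NCP] lin_sum[OF lin_LM]
    by (simp add: Delta0_word_Cons gg_mult_bil pm_bil_unit_right[where m=ggm and e="([], [])", OF u] Delta0_gen_def pm_tprod_bil pm_bil_sum_left)
  have NCX: "\<forall>R\<in>set [restr P (\<Union>L)]. NC R" if "lowerset P L" for L
  proof -
    have "\<Union>L \<subseteq> \<Union>P" using that by (auto simp: lowerset_def)
    then show ?thesis using NC_restr[OF NCP] by simp
  qed
  have NCG: "\<forall>R\<in>set (map (\<lambda>i. restr P (gap P (\<Union>L) i)) [0..<card (\<Union>L) + 1]). NC R" for L
    using NC_restr[OF NCP] gap_sub UP by auto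
  have inner: "RR (pm_basis ([restr P (\<Union>L)], map (\<lambda>i. restr P (gap P (\<Union>L) i)) [0..<card (\<Union>L) + 1]))
     = (\<Sum>qs1\<in>listset [coarser_NC (restr P (\<Union>L))].
            \<Sum>qs2\<in>listset (map (\<lambda>i. coarser_NC (restr P (gap P (\<Union>L) i))) [0..<card (\<Union>L) + 1]).
            pm_basis ((qs1, qs2), sum_list (map2 quot [restr P (\<Union>L)] qs1)
               + sum_list (map2 quot (map (\<lambda>i. restr P (gap P (\<Union>L) i)) [0..<card (\<Union>L) + 1]) qs2)))"
    if L: "lowerset P L" for L
    unfolding RR_basis rho_word_expand[OF NCX[OF L]] rho_word_expand[OF NCG]
    by (simp del: upt_Suc add: pm_tprod_bil pm_bil_sum_left pm_bil_sum_right lin_sum[OF lin_TR] comp_def)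
      (rule sum.swap)
  have RHS: "RR (Delta0_gen P) = (\<Sum>L\<in>{L. lowerset P L}. \<Sum>qs1\<in>listset [coarser_NC (restr P (\<Union>L))].
            \<Sum>qs2\<in>listset (map (\<lambda>i. coarser_NC (restr P (gap P (\<Union>L) i))) [0..<card (\<Union>L) + 1]).
            pm_basis ((qs1, qs2), sum_list (map2 quot [restr P (\<Union>L)] qs1)
               + sum_list (map2 quot (map (\<lambda>i. restr P (gap P (\<Union>L) i)) [0..<card (\<Union>L) + 1]) qs2)))"
    unfolding Delta0_gen_def lin_sum[OF lin_RR] by (rule sum.cong[OF refl]) (rule inner, simp)
  show ?thesis unfolding LHS RHS by (rule comb_sum[OF P ncP])
qed

lemma LM_RR_word:
  assumes "\<forall>P\<in>set w. NC P"
  shows "LM (rho_word w) = (RR (Delta0_word w) :: _ \<Rightarrow>\<^sub>0 'k::comm_ring_1)"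
  using assms
proof (induction w)
  case Nil
  then show ?case by simp
next
  case (Cons P w)
  have "LM (rho_word (P # w)) = (pm_bil ggbm (LM (rho_gen P)) (LM (rho_word w)) :: _ \<Rightarrow>\<^sub>0 'k)"
    by (simp add: rho_word_Cons gb_mult_bil LM_mult)
  also have "\<dots> = pm_bil ggbm (RR (Delta0_gen P)) (RR (Delta0_word w))"
    using Cons by (simp add: core)
  also have "\<dots> = RR (Delta0_word (P # w))"
    by (simp add: Delta0_word_Cons gg_mult_bil RR_mult)
  finally show ?case .
qed

lemma compat_part:
  fixes P :: "word \<Rightarrow>\<^sub>0 'k::comm_ring_1"
  assumes "in_Bgap P"
  shows "pm_tensor_map (\<lambda>w. Delta0 (pm_basis w)) pm_basis (rho P)
         = pm_tensor_map pm_basis (\<lambda>bd. m_bl (pm_basis bd))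
             (pm_relabel (\<lambda>((a, b), (c, d)). ((a, c), (b, d)))
               (pm_tensor_map (\<lambda>w. rho (pm_basis w)) (\<lambda>w. rho (pm_basis w)) (Delta0 P)))"
proof -
  have "LM (rho P) = pm_ext (\<lambda>w. LM (rho_word w)) P"
    by (simp add: rho_def pm_ext_compose linD[OF lin_LM, of "pm_ext rho_word P"]) (simp add: linD[OF lin_LM, symmetric])
  also have "\<dots> = pm_ext (\<lambda>w. RR (Delta0_word w)) P"
    using assms by (intro pm_ext_cong LM_RR_word) (auto simp: in_Bgap_def)
  also have "\<dots> = RR (Delta0 P)"
    by (simp add: Delta0_def pm_ext_compose linD[OF lin_RR, of "pm_ext Delta0_word P"]) (simp add: linD[OF lin_RR, symmetric])
  finally show ?thesis by (simp add: LM_def RR_def TR_def)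
qed

theorem mainTheorem7:
  fixes P Q :: "word \<Rightarrow>\<^sub>0 'k::field"
  assumes "in_Bgap P" and "in_Bgap Q"
  shows "(rho (gap_one :: word \<Rightarrow>\<^sub>0 'k) = pm_basis ([], {#})) \<and>
      (rho (gap_mult P Q) = gb_mult (rho P) (rho Q)) \<and>
      (pm_ext (\<lambda>(w, m). pm_scale (eps_gap (pm_basis w)) (pm_basis m)) (rho P)
         = pm_scale (eps_gap P) bl_one) \<and>
      (pm_tensor_map (\<lambda>w. Delta0 (pm_basis w)) pm_basis (rho P)
         = pm_tensor_map pm_basis (\<lambda>bd. m_bl (pm_basis bd))
             (pm_relabel (\<lambda>((a, b), (c, d)). ((a, c), (b, d)))
               (pm_tensor_map (\<lambda>w. rho (pm_basis w)) (\<lambda>w. rho (pm_basis w)) (Delta0 P))))"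
  using rho_one rho_mult counit_part[OF assms(1)] compat_part[OF assms(1)] by blast

end
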